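(* Consider the linear system $\dot x(t)=Ax(t)+Bu(t)$ with constraints $(x(t),u(t))\in\mathcal{E}$ and $u(t)\in U$, suppose (A4) and (A5) hold, and let the stage cost be the quadratic form $\ell(x,u)=x^TQx+2x^TSu+u^TRu$ with symmetric positive definite block matrix $\begin{pmatrix}Q&S\\S^T&R\end{pmatrix}$. Then for every $\lambda\in[0,1)$ there exists a constant $M(\lambda)<\infty$ such that $V_\infty(x)\le M(\lambda)$ for all $x\in\lambda\mathcal{A}$. (A4): the pair $(A,B)$ is stabilisable. (A5): the sets $U\subset\mathbb{R}^m$ and $\mathcal{E}:=\{(x,u): g(x,u)\le0\}$, with $g\in\mathcal{C}^2(\mathbb{R}^n\times\mathbb{R}^m,\mathbb{R}^p)$, are convex, compact, and contain the origin in their interior, and each map $u\mapsto g_i(x,u)$ is convex.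
   Context: $A\in\mathbb{R}^{n\times n}$, $B\in\mathbb{R}^{n\times m}$; $x(t;x_0,u)$ denotes the solution with $x(0)=x_0$ under $u\in L^\infty_{\mathrm{loc}}(\mathbb{R}_{\ge0},\mathbb{R}^m)$. $\mathcal{U}_\infty(x_0)$ is the set of such $u$ with $(x(t;x_0,u),u(t))\in\mathcal{E}$ and $u(t)\in U$ for all $t\ge0$. The viability kernel is $\mathcal{A}:=\{x_0:\mathcal{U}_\infty(x_0)\neq\emptyset\}$ and $\lambda\mathcal{A}:=\{\lambda x: x\in\mathcal{A}\}$. $V_\infty(x_0):=\inf_{u\in\mathcal{U}_\infty(x_0)}\int_0^\infty\ell(x(s;x_0,u),u(s))\,\mathrm{d}s$ ($=+\infty$ if $\mathcal{U}_\infty(x_0)=\emptyset$). *)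

theory Defs
  imports "HOL-Analysis.Analysis"
begin

text \<open>Linear control system  x' = A x + B u, state in real^'n, input in real^'m.\<close>

text \<open>Locally essentially bounded measurable inputs on [0,oo).\<close>
definition Linf_loc :: "(real \<Rightarrow> 'a::euclidean_space) \<Rightarrow> bool" where
  "Linf_loc u \<longleftrightarrow> u \<in> borel_measurable (restrict_space lborel {0..}) \<and>
     (\<forall>T\<ge>0. \<exists>C. AE t in lborel. t \<in> {0..T} \<longrightarrow> norm (u t) \<le> C)"

text \<open>(Caratheodory) solution x(.;x0,u) on [0,oo):
  x t = x0 + \<integral>_0^t (A x s + B u s) ds for all t \<ge> 0.\<close>
definition is_traj ::
  "real^'n^'n \<Rightarrow> real^'m^'n \<Rightarrow> real^'n \<Rightarrow> (real \<Rightarrow> real^'m) \<Rightarrow> (real \<Rightarrow> real^'n) \<Rightarrow> bool" where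
  "is_traj A B x0 u x \<longleftrightarrow>
     (\<forall>t\<ge>0. ((\<lambda>s. A *v x s + B *v u s) has_integral (x t - x0)) {0..t})"

definition adm_controls ::
  "real^'n^'n \<Rightarrow> real^'m^'n \<Rightarrow> ((real^'n) \<times> (real^'m)) set \<Rightarrow> (real^'m) set
    \<Rightarrow> real^'n \<Rightarrow> (real \<Rightarrow> real^'m) set" where
  "adm_controls A B E U x0 = {u. Linf_loc u \<and> (\<exists>x. is_traj A B x0 u x \<and>
      (\<forall>t\<ge>0. (x t, u t) \<in> E \<and> u t \<in> U))}"

definition viab_kernel ::
  "real^'n^'n \<Rightarrow> real^'m^'n \<Rightarrow> ((real^'n) \<times> (real^'m)) set \<Rightarrow> (real^'m) set \<Rightarrow> (real^'n) set" where
  "viab_kernel A B E U = {x0. adm_controls A B E U x0 \<noteq> {}}"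

text \<open>Infinite-horizon value function (Inf {} = \<infinity>).\<close>
definition V_inf ::
  "real^'n^'n \<Rightarrow> real^'m^'n \<Rightarrow> ((real^'n) \<times> (real^'m)) set \<Rightarrow> (real^'m) set
    \<Rightarrow> (real^'n \<Rightarrow> real^'m \<Rightarrow> real) \<Rightarrow> real^'n \<Rightarrow> ennreal" where
  "V_inf A B E U ell x0 = Inf {(\<integral>\<^sup>+ s. indicator {0..} s * ennreal (ell (x s) (u s)) \<partial>lborel) | u x.
      u \<in> adm_controls A B E U x0 \<and> is_traj A B x0 u x}"

text \<open>Complexification of a real matrix, used for eigenvalues.\<close>
definition cmat :: "real^'n^'n \<Rightarrow> complex^'n^'n" where
  "cmat M = (\<chi> i j. complex_of_real (M $ i $ j))"

text \<open>(A,B) stabilisable: some feedback K makes A + B K Hurwitz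
  (all complex eigenvalues have negative real part).\<close>
definition stabilisable :: "real^'n^'n \<Rightarrow> real^'m^'n \<Rightarrow> bool" where
  "stabilisable A B \<longleftrightarrow> (\<exists>K :: real^'n^'m. \<forall>(\<mu>::complex) (v::complex^'n).
      v \<noteq> 0 \<and> cmat (A + B ** K) *v v = \<mu> *s v \<longrightarrow> Re \<mu> < 0)"

text \<open>g is of class C^2 on the whole space.\<close>
definition C2 :: "('a::real_normed_vector \<Rightarrow> 'b::real_normed_vector) \<Rightarrow> bool" where
  "C2 g \<longleftrightarrow> (\<exists>g' g''. (\<forall>z. (g has_derivative blinfun_apply (g' z)) (at z)) \<and>
      (\<forall>z. (g' has_derivative blinfun_apply (g'' z)) (at z)) \<and> continuous_on UNIV g'')"

end

theory Submission
  imports Defs "Jordan_Normal_Form.Schur_Decomposition"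
begin

(* ---- part Expo ---- *)


definition mpow :: "real^'n^'n \<Rightarrow> nat \<Rightarrow> real^'n \<Rightarrow> real^'n" where
  "mpow M k = ((\<lambda>w. M *v w) ^^ k)"

definition Phi :: "real^'n^'n \<Rightarrow> real \<Rightarrow> real^'n \<Rightarrow> real^'n" where
  "Phi M t v = (\<Sum>k. (t^k / fact k) *\<^sub>R mpow M k v)"

lemma mpow_Suc:
  fixes M :: "real^'n^'n"
  shows "mpow M (Suc k) v = M *v mpow M k v"
  by (simp add: mpow_def)

lemma mpow_0:
  fixes M :: "real^'n^'n"
  shows "mpow M 0 v = v"
  by (simp add: mpow_def)

lemma matvec_bound:
  fixes M :: "real^'n^'n"
  shows "\<exists>c>0. \<forall>w. norm (M *v w) \<le> c * norm w"
proof -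
  have "bounded_linear (\<lambda>w. M *v w)" by (rule matrix_vector_mul_bounded_linear)
  then obtain K where "K > 0" "\<And>x. norm (M *v x) \<le> norm x * K"
    using bounded_linear.pos_bounded by blast
  then show ?thesis by (metis mult.commute)
qed

lemma mpow_bound:
  fixes M :: "real^'n^'n"
  assumes "\<forall>w. norm (M *v w) \<le> c * norm w" "c > 0"
  shows "norm (mpow M k v) \<le> c^k * norm v"
proof (induction k)
  case 0 then show ?case by (simp add: mpow_0)
next
  case (Suc k)
  have "norm (mpow M (Suc k) v) \<le> c * norm (mpow M k v)"
    using assms by (simp add: mpow_Suc)
  also have "\<dots> \<le> c * (c^k * norm v)"
    using Suc assms by (intro mult_left_mono) auto
  finally show ?case by simp
qed

lemma Phi_summable:
  fixes M :: "real^'n^'n"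
  shows "summable (\<lambda>k. (t^k / fact k) *\<^sub>R mpow M k v)"
proof -
  obtain c where c: "c > 0" "\<forall>w. norm (M *v w) \<le> c * norm w"
    using matvec_bound by blast
  have s: "summable (\<lambda>k. norm v * ((\<bar>t\<bar> * c)^k /\<^sub>R fact k))"
    by (intro summable_mult summable_exp_generic)
  show ?thesis
  proof (rule summable_norm_cancel, rule summable_comparison_test[OF _ s], intro exI allI impI)
    fix k :: nat
    have "norm (norm ((t^k / fact k) *\<^sub>R mpow M k v)) = (\<bar>t\<bar>^k / fact k) * norm (mpow M k v)"
      by (simp add: power_abs)
    also have "\<dots> \<le> (\<bar>t\<bar>^k / fact k) * (c^k * norm v)"
      by (intro mult_left_mono mpow_bound c) auto
    also have "\<dots> = norm v * ((\<bar>t\<bar> * c)^k /\<^sub>R fact k)"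
      by (simp add: power_mult_distrib field_simps)
    finally show "norm (norm ((t^k / fact k) *\<^sub>R mpow M k v)) \<le> norm v * ((\<bar>t\<bar> * c)^k /\<^sub>R fact k)" .
  qed
qed

lemma Phi_comp:
  fixes M :: "real^'n^'n"
  shows "Phi M t v $ i = (\<Sum>k. (mpow M k v $ i / fact k) * t^k)"
proof -
  have "bounded_linear (\<lambda>x::real^'n. x $ i)" by (rule bounded_linear_vec_nth)
  from bounded_linear.suminf[OF this Phi_summable[of t M v]]
  show ?thesis unfolding Phi_def by (simp add: field_simps)
qed

lemma Phi_comp_summable:
  fixes M :: "real^'n^'n"
  shows "summable (\<lambda>k. (mpow M k v $ i / fact k) * t^k)"
proof -
  have "bounded_linear (\<lambda>x::real^'n. x $ i)" by (rule bounded_linear_vec_nth)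
  from bounded_linear.summable[OF this Phi_summable[of t M v]]
  show ?thesis by (simp add: field_simps)
qed

lemma Phi_0:
  fixes M :: "real^'n^'n"
  shows "Phi M 0 v = v"
proof -
  have "(\<lambda>k. (0^k / fact k) *\<^sub>R mpow M k v) = (\<lambda>k. if k = 0 then mpow M k v else 0)"
    by auto
  then show ?thesis unfolding Phi_def using sums_single[of 0 "\<lambda>k. mpow M k v"]
    by (simp add: sums_iff mpow_0)
qed

lemma Phi_deriv_comp:
  fixes M :: "real^'n^'n"
  shows "((\<lambda>t. Phi M t v $ i) has_real_derivative (M *v Phi M t v) $ i) (at t)"
proof -
  define c where "c k = mpow M k v $ i / fact k" for k
  have d: "((\<lambda>t. \<Sum>k. c k * t^k) has_real_derivative (\<Sum>k. diffs c k * t^k)) (at t)"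
    by (rule termdiffs_strong_converges_everywhere)
      (use Phi_comp_summable[where M=M and v=v and i=i] in \<open>simp add: c_def field_simps\<close>)
  have "diffs c k * t^k = ((t^k / fact k) *\<^sub>R mpow M (Suc k) v) $ i" for k
  proof -
    have f: "(fact (Suc k) :: real) = real (Suc k) * fact k" by simp
    have "diffs c k = mpow M (Suc k) v $ i / fact k"
      unfolding diffs_def c_def f by (simp del: of_nat_Suc)
    then show ?thesis by simp
  qed
  then have "(\<Sum>k. diffs c k * t^k) = (\<Sum>k. (M *v ((t^k / fact k) *\<^sub>R mpow M k v)) $ i)"
    by (simp add: mpow_Suc matrix_vector_mult_scaleR)
  also have "\<dots> = (M *v Phi M t v) $ i"
  proof -
    have bl: "bounded_linear (\<lambda>x::real^'n. (M *v x) $ i)"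
      by (intro bounded_linear_compose[OF bounded_linear_vec_nth] matrix_vector_mul_bounded_linear)
    from bounded_linear.suminf[OF bl Phi_summable[of t M v]] show ?thesis
      unfolding Phi_def by simp
  qed
  finally show ?thesis using d by (simp add: c_def Phi_comp[abs_def])
qed

lemma Phi_cont:
  fixes M :: "real^'n^'n"
  shows "continuous_on S (\<lambda>t. Phi M t v)"
proof -
  have "continuous_on S (\<lambda>t. \<chi> i. Phi M t v $ i)"
  proof (intro continuous_on_vec_lambda)
    fix i show "continuous_on S (\<lambda>t. Phi M t v $ i)"
      by (intro continuous_at_imp_continuous_on ballI DERIV_isCont[OF Phi_deriv_comp])
  qed
  then show ?thesis by simp
qed


(* ---- part Expo2 ---- *)


lemma Phi_integral:
  fixes M :: "real^'n^'n"
  assumes "c \<le> d"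
  shows "((\<lambda>s. M *v Phi M (s - c) v) has_integral (Phi M (d - c) v - v)) {c..d}"
proof (subst has_integral_componentwise_iff, intro ballI)
  fix b :: "real^'n" assume "b \<in> Basis"
  then obtain i where b: "b = axis i 1" unfolding Basis_vec_def by auto
  have "((\<lambda>s. (M *v Phi M (s - c) v) $ i) has_integral (Phi M (d - c) v $ i - Phi M (c - c) v $ i)) {c..d}"
  proof (rule fundamental_theorem_of_calculus[OF assms])
    fix x assume "x \<in> {c..d}"
    have "((\<lambda>s. Phi M (s - c) v $ i) has_real_derivative (M *v Phi M (x - c) v) $ i * 1) (at x)"
      by (rule DERIV_chain2[OF Phi_deriv_comp]) (auto intro!: derivative_eq_intros)
    then show "((\<lambda>s. Phi M (s - c) v $ i) has_vector_derivative (M *v Phi M (x - c) v) $ i) (at x within {c..d})"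
      by (simp add: has_real_derivative_iff_has_vector_derivative has_vector_derivative_at_within)
  qed
  then show "((\<lambda>s. (M *v Phi M (s - c) v) \<bullet> b) has_integral (Phi M (d - c) v - v) \<bullet> b) {c..d}"
    by (simp add: b inner_axis Phi_0)
qed

lemma inner_deriv:
  fixes M :: "real^'n^'n" and l :: "real^'n"
  shows "((\<lambda>s. l \<bullet> Phi M s v) has_real_derivative (l \<bullet> (M *v Phi M s v))) (at s)"
  unfolding inner_vec_def
  by (auto intro!: derivative_eq_intros Phi_deriv_comp simp: mult.commute)

lemma Phi_decay:
  fixes M :: "real^'n^'n" and L :: "nat \<Rightarrow> real^'n"
  assumes sig: "sg \<ge> 0"
    and H: "\<And>e. (\<Sum>i<N. (L i \<bullet> e) * (L i \<bullet> (M *v e))) \<le> - sg * (\<Sum>i<N. (L i \<bullet> e)^2)"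
    and t: "t \<ge> 0"
  shows "(\<Sum>i<N. (L i \<bullet> Phi M t v)^2) \<le> exp (-(2 * sg * t)) * (\<Sum>i<N. (L i \<bullet> v)^2)"
proof -
  define W where "W s = (\<Sum>i<N. (L i \<bullet> Phi M s v)^2)" for s
  define g where "g s = exp (2 * sg * s) * W s" for s
  have dW: "(W has_real_derivative (\<Sum>i<N. 2 * (L i \<bullet> Phi M s v) * (L i \<bullet> (M *v Phi M s v)))) (at s)" for s
    unfolding W_def
    by (auto intro!: derivative_eq_intros inner_deriv simp: power2_eq_square mult.assoc)
  have "g t \<le> g 0"
  proof (rule DERIV_nonpos_imp_nonincreasing[OF t])
    fix x assume "0 \<le> x" "x \<le> t"
    let ?D = "2 * sg * exp (2 * sg * x) * W x + exp (2 * sg * x) * (\<Sum>i<N. 2 * (L i \<bullet> Phi M x v) * (L i \<bullet> (M *v Phi M x v)))"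
    have "(g has_real_derivative ?D) (at x)"
      unfolding g_def by (auto intro!: derivative_eq_intros dW)
    moreover have "?D \<le> 0"
    proof -
      have "(\<Sum>i<N. 2 * (L i \<bullet> Phi M x v) * (L i \<bullet> (M *v Phi M x v))) \<le> - 2 * sg * W x"
      proof -
        have "(\<Sum>i<N. 2 * (L i \<bullet> Phi M x v) * (L i \<bullet> (M *v Phi M x v)))
            = 2 * (\<Sum>i<N. (L i \<bullet> Phi M x v) * (L i \<bullet> (M *v Phi M x v)))"
          by (simp add: sum_distrib_left mult.assoc)
        also have "\<dots> \<le> 2 * (- sg * (\<Sum>i<N. (L i \<bullet> Phi M x v)^2))"
          using H[of "Phi M x v"] by linarith
        finally show ?thesis unfolding W_def by simp
      qed
      then have "exp (2 * sg * x) * (\<Sum>i<N. 2 * (L i \<bullet> Phi M x v) * (L i \<bullet> (M *v Phi M x v)))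
          \<le> exp (2 * sg * x) * (- 2 * sg * W x)"
        by (intro mult_left_mono) auto
      then show ?thesis by (simp add: algebra_simps)
    qed
    ultimately show "\<exists>y. (g has_real_derivative y) (at x) \<and> y \<le> 0" by blast
  qed
  then have "exp (2 * sg * t) * W t \<le> W 0" by (simp add: g_def)
  then have "W t \<le> exp (-(2 * sg * t)) * W 0"
    by (simp add: exp_minus field_simps)
  then show ?thesis by (simp add: W_def Phi_0)
qed


(* ---- part Spec ---- *)


lemma schur_nat:
  fixes A :: "nat \<Rightarrow> nat \<Rightarrow> complex"
  shows "\<exists>B P Q. B \<in> carrier_mat n n \<and> P \<in> carrier_mat n n \<and> Q \<in> carrier_mat n n \<and>
     upper_triangular B \<and> P * Q = 1\<^sub>m n \<and> Q * P = 1\<^sub>m n \<and> Matrix.mat n n (\<lambda>(i,j). A i j) = P * B * Q \<and>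
     (\<forall>i<n. \<exists>v::nat\<Rightarrow>complex. (\<exists>j<n. v j \<noteq> 0) \<and> (\<forall>k<n. (\<Sum>j<n. A k j * v j) = B $$ (i,i) * v k))"
proof -
  define Am where "Am = Matrix.mat n n (\<lambda>(i,j). A i j)"
  have Am: "Am \<in> carrier_mat n n" by (simp add: Am_def)
  obtain es where es: "char_poly Am = (\<Prod>a\<leftarrow>es. [:- a, 1:])"
    using char_poly_factorized[OF Am] by blast
  obtain B where B: "B \<in> carrier_mat n n" "upper_triangular B" "similar_mat Am B"
    using schur_decomposition_exists[OF Am es] by blast
  obtain n' P Q where PQ: "{Am, B, P, Q} \<subseteq> carrier_mat n' n'" "P * Q = 1\<^sub>m n'" "Q * P = 1\<^sub>m n'" "Am = P * B * Q"
    using similar_matD[OF B(3)] by blast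
  have nn: "n' = n" using PQ(1) Am by auto
  have ev: "\<exists>v::nat\<Rightarrow>complex. (\<exists>j<n. v j \<noteq> 0) \<and> (\<forall>k<n. (\<Sum>j<n. A k j * v j) = B $$ (i,i) * v k)"
    if i: "i < n" for i
  proof -
    have cpB: "char_poly B = (\<Prod>a\<leftarrow>diag_mat B. [:- a, 1:])"
      by (rule char_poly_upper_triangular[OF B(1) B(2)])
    have "B $$ (i,i) \<in> set (diag_mat B)" using i B(1) by (auto simp: diag_mat_def)
    then have "poly (char_poly B) (B $$ (i,i)) = 0"
      unfolding cpB poly_prod_list by (auto simp: prod_list_zero_iff o_def)
    then have "poly (char_poly Am) (B $$ (i,i)) = 0" using char_poly_similar[OF B(3)] by simp
    then have "eigenvalue Am (B $$ (i,i))" using eigenvalue_root_char_poly[OF Am] by simp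
    then obtain v where v: "v \<in> carrier_vec n" "v \<noteq> 0\<^sub>v n" "Am *\<^sub>v v = B $$ (i,i) \<cdot>\<^sub>v v"
      unfolding eigenvalue_def eigenvector_def using Am by auto
    have "\<exists>j<n. v $ j \<noteq> 0"
    proof (rule ccontr)
      assume "\<not> ?thesis"
      then have "v = 0\<^sub>v n" using v(1) by (intro eq_vecI) auto
      then show False using v(2) by simp
    qed
    moreover have "(\<Sum>j<n. A k j * v $ j) = B $$ (i,i) * v $ k" if k: "k < n" for k
    proof -
      have "(Am *\<^sub>v v) $ k = (B $$ (i,i) \<cdot>\<^sub>v v) $ k" using v(3) by simp
      then show ?thesis using k v(1) Am
        by (simp add: Am_def scalar_prod_def atLeast0LessThan)
    qed
    ultimately show ?thesis by (intro exI[of _ "\<lambda>j. v $ j"]) auto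
  qed
  have P: "P \<in> carrier_mat n n" and Q: "Q \<in> carrier_mat n n" using PQ(1) nn by auto
  have "P * Q = 1\<^sub>m n" "Q * P = 1\<^sub>m n" using PQ(2,3) nn by auto
  moreover have "Matrix.mat n n (\<lambda>(i,j). A i j) = P * B * Q" using PQ(4) Am_def by simp
  ultimately show ?thesis using B(1,2) P Q ev by blast
qed


(* ---- part Spec2 ---- *)


lemma tri_ineq:
  fixes B :: "complex mat"
  assumes Bc: "B \<in> carrier_mat n n" and ut: "upper_triangular B" and sg0: "sg0 > 0"
    and diag: "\<forall>i<n. Re (B $$ (i,i)) \<le> - sg0"
  shows "\<exists>\<epsilon>>0. \<epsilon> \<le> 1 \<and> (\<forall>w::nat\<Rightarrow>complex.
     Re (\<Sum>i<n. cnj (w i) * (\<Sum>j<n. B $$ (i,j) * of_real (\<epsilon>^(j-i)) * w j))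
       \<le> -(sg0/2) * (\<Sum>i<n. (cmod (w i))\<^sup>2))"
proof -
  define bmax where "bmax = (\<Sum>i<n. \<Sum>j<n. cmod (B $$ (i,j)))"
  have bmax0: "bmax \<ge> 0" unfolding bmax_def by (intro sum_nonneg) auto
  define \<epsilon> where "\<epsilon> = min 1 (sg0 / (2 * (bmax + 1)))"
  have e0: "\<epsilon> > 0" "\<epsilon> \<le> 1" using sg0 bmax0 by (auto simp: \<epsilon>_def)
  have ebm: "\<epsilon> * bmax \<le> sg0 / 2"
  proof -
    have "\<epsilon> * bmax \<le> sg0 / (2 * (bmax + 1)) * bmax"
      using bmax0 by (intro mult_right_mono) (auto simp: \<epsilon>_def)
    also have "\<dots> = sg0 / 2 * (bmax / (bmax + 1))" using bmax0 by (simp add: field_simps)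
    also have "\<dots> \<le> sg0 / 2 * 1" using bmax0 sg0 by (intro mult_left_mono) auto
    finally show ?thesis by simp
  qed
  have main: "Re (\<Sum>i<n. cnj (w i) * (\<Sum>j<n. B $$ (i,j) * of_real (\<epsilon>^(j-i)) * w j))
       \<le> -(sg0/2) * (\<Sum>i<n. (cmod (w i))\<^sup>2)" for w :: "nat \<Rightarrow> complex"
  proof -
    define W where "W = (\<Sum>i<n. (cmod (w i))\<^sup>2)"
    define X where "X i j = cnj (w i) * (B $$ (i,j) * of_real (\<epsilon>^(j-i)) * w j)" for i j
    have W0: "W \<ge> 0" unfolding W_def by (intro sum_nonneg) auto
    have wle: "(cmod (w i))\<^sup>2 \<le> W" if "i < n" for i
      unfolding W_def using that by (intro member_le_sum) auto
    have split: "(\<Sum>i<n. cnj (w i) * (\<Sum>j<n. B $$ (i,j) * of_real (\<epsilon>^(j-i)) * w j))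
        = (\<Sum>i<n. X i i) + (\<Sum>i<n. \<Sum>j<n. if j = i then 0 else X i j)"
    proof -
      have "cnj (w i) * (\<Sum>j<n. B $$ (i,j) * of_real (\<epsilon>^(j-i)) * w j)
          = X i i + (\<Sum>j<n. if j = i then 0 else X i j)" if "i < n" for i
      proof -
        have "cnj (w i) * (\<Sum>j<n. B $$ (i,j) * of_real (\<epsilon>^(j-i)) * w j) = (\<Sum>j<n. X i j)"
          by (simp add: X_def sum_distrib_left)
        also have "\<dots> = (\<Sum>j<n. (if j = i then X i j else 0) + (if j = i then 0 else X i j))"
          by (intro sum.cong) auto
        also have "\<dots> = X i i + (\<Sum>j<n. if j = i then 0 else X i j)"
          using that by (simp add: sum.distrib)
        finally show ?thesis .
      qed
      then show ?thesis by (simp add: sum.distrib)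
    qed
    have d: "Re (\<Sum>i<n. X i i) \<le> - sg0 * W"
    proof -
      have "Re (X i i) = Re (B $$ (i,i)) * (cmod (w i))\<^sup>2" for i
      proof -
        have "X i i = B $$ (i,i) * (cnj (w i) * w i)" by (simp add: X_def)
        also have "cnj (w i) * w i = of_real ((cmod (w i))\<^sup>2)" by (metis complex_norm_square mult.commute)
        finally show ?thesis by simp
      qed
      then have "Re (\<Sum>i<n. X i i) = (\<Sum>i<n. Re (B $$ (i,i)) * (cmod (w i))\<^sup>2)" by (simp add: Re_sum)
      also have "\<dots> \<le> (\<Sum>i<n. - sg0 * (cmod (w i))\<^sup>2)"
        using diag by (intro sum_mono mult_right_mono) auto
      finally show ?thesis by (simp add: W_def sum_distrib_left)
    qed
    have o: "Re (\<Sum>i<n. \<Sum>j<n. if j = i then 0 else X i j) \<le> \<epsilon> * bmax * W"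
    proof -
      have b: "cmod (if j = i then 0 else X i j) \<le> \<epsilon> * W * cmod (B $$ (i,j))" if "i < n" "j < n" for i j
      proof (cases "j = i")
        case True then show ?thesis using e0 W0 by simp
      next
        case False
        show ?thesis
        proof (cases "j < i")
          case True
          then have "B $$ (i,j) = 0" using ut Bc \<open>i < n\<close> by (auto simp: upper_triangular_def)
          then show ?thesis using False by (simp add: X_def)
        next
          case ji: False
          with False have "j - i \<ge> 1" by simp
          then have pe: "\<epsilon>^(j-i) \<le> \<epsilon>" using power_decreasing[of 1 "j-i" \<epsilon>] e0 by simp
          have ww: "cmod (w i) * cmod (w j) \<le> W"
          proof -
            have "cmod (w i) * cmod (w j) \<le> ((cmod (w i))\<^sup>2 + (cmod (w j))\<^sup>2) / 2"
              using sum_squares_bound[of "cmod (w i)" "cmod (w j)"] by (simp add: power2_eq_square) 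
            also have "\<dots> \<le> W" using wle[OF \<open>i<n\<close>] wle[OF \<open>j<n\<close>] by simp
            finally show ?thesis .
          qed
          have "cmod (X i j) = cmod (B $$ (i,j)) * \<epsilon>^(j-i) * (cmod (w i) * cmod (w j))"
            using e0 by (simp add: X_def norm_mult norm_power)
          also have "\<dots> \<le> cmod (B $$ (i,j)) * \<epsilon> * W"
            using pe ww e0 by (intro mult_mono) auto
          finally show ?thesis using False by (simp add: mult_ac)
        qed
      qed
      have "Re (\<Sum>i<n. \<Sum>j<n. if j = i then 0 else X i j) \<le> cmod (\<Sum>i<n. \<Sum>j<n. if j = i then 0 else X i j)"
        by (rule complex_Re_le_cmod)
      also have "\<dots> \<le> (\<Sum>i<n. \<Sum>j<n. cmod (if j = i then 0 else X i j))"
        by (rule order_trans[OF norm_sum sum_mono]) (rule norm_sum)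
      also have "\<dots> \<le> (\<Sum>i<n. \<Sum>j<n. \<epsilon> * W * cmod (B $$ (i,j)))"
        using b by (intro sum_mono) auto
      also have "\<dots> = \<epsilon> * W * bmax" by (simp add: bmax_def sum_distrib_left)
      finally show ?thesis by (simp add: mult_ac)
    qed
    have "\<epsilon> * bmax * W \<le> sg0 / 2 * W" using ebm W0 by (intro mult_right_mono) auto
    moreover have "Re (\<Sum>i<n. cnj (w i) * (\<Sum>j<n. B $$ (i,j) * of_real (\<epsilon>^(j-i)) * w j))
        = Re (\<Sum>i<n. X i i) + Re (\<Sum>i<n. \<Sum>j<n. if j = i then 0 else X i j)"
      unfolding split by (rule plus_complex.sel)
    ultimately show ?thesis using d o unfolding W_def by linarith
  qed
  show ?thesis using e0 main by blast
qed


(* ---- part Spec3 ---- *)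


lemma index_bij:
  "\<exists>(fr::nat \<Rightarrow> 'n::finite) to. bij_betw to (UNIV::'n set) {..<CARD('n)} \<and>
     (\<forall>j<CARD('n). to (fr j) = j) \<and> (\<forall>k. fr (to k) = k) \<and> (\<forall>k. to k < CARD('n))"
proof -
  obtain fr :: "nat \<Rightarrow> 'n" where fr: "bij_betw fr {0..<CARD('n)} UNIV"
    using ex_bij_betw_nat_finite[of "UNIV::'n set"] by auto
  then have fr': "bij_betw fr {..<CARD('n)} UNIV" by (simp add: atLeast0LessThan)
  define to where "to = the_inv_into {..<CARD('n)} fr"
  have b: "bij_betw to UNIV {..<CARD('n)}" unfolding to_def by (rule bij_betw_the_inv_into[OF fr'])
  have "to (fr j) = j" if "j < CARD('n)" for j
    unfolding to_def using fr' that by (auto intro!: the_inv_into_f_f simp: bij_betw_def)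
  moreover have "fr (to k) = k" for k
    unfolding to_def using fr' by (auto intro!: f_the_inv_into_f_bij_betw)
  moreover have "to k < CARD('n)" for k using b by (auto simp: bij_betw_def)
  ultimately show ?thesis using b by blast
qed

lemma ring4: "(x::complex) * y = a \<Longrightarrow> a * (b * c) = (b * x) * (y * c)"
  by (simp add: mult_ac)

lemma lyap_pairs:
  fixes M :: "real^'n^'n"
  assumes H: "\<forall>(\<mu>::complex) (v::complex^'n). v \<noteq> 0 \<and> cmat M *v v = \<mu> *s v \<longrightarrow> Re \<mu> < 0"
  shows "\<exists>(Lr::nat \<Rightarrow> real^'n) Li c1 sg. c1 > 0 \<and> sg > 0 \<and>
    (\<forall>e. c1 * (norm e)\<^sup>2 \<le> (\<Sum>i<CARD('n). (Lr i \<bullet> e)\<^sup>2 + (Li i \<bullet> e)\<^sup>2)) \<and>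
    (\<forall>e. (\<Sum>i<CARD('n). (Lr i \<bullet> e) * (Lr i \<bullet> (M *v e)) + (Li i \<bullet> e) * (Li i \<bullet> (M *v e)))
        \<le> - sg * (\<Sum>i<CARD('n). (Lr i \<bullet> e)\<^sup>2 + (Li i \<bullet> e)\<^sup>2))"
proof -
  define n where "n = CARD('n)"
  have n0: "n > 0" unfolding n_def by simp
  obtain fr :: "nat \<Rightarrow> 'n" and to where ft: "bij_betw to (UNIV::'n set) {..<n}"
    "\<And>j. j < n \<Longrightarrow> to (fr j) = j" "\<And>k. fr (to k) = k" "\<And>k. to k < n"
    using index_bij unfolding n_def by blast
  have reidx: "(\<Sum>k\<in>UNIV. g (to k)) = (\<Sum>j<n. g j)" for g :: "nat \<Rightarrow> 'b::comm_monoid_add"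
    by (rule sum.reindex_bij_betw[OF ft(1)])
  define A where "A i j = complex_of_real (M $ fr i $ fr j)" for i j
  obtain B P Q where BPQ: "B \<in> carrier_mat n n" "P \<in> carrier_mat n n" "Q \<in> carrier_mat n n"
     "upper_triangular B" "P * Q = 1\<^sub>m n" "Q * P = 1\<^sub>m n" "Matrix.mat n n (\<lambda>(i,j). A i j) = P * B * Q"
     and ev: "\<And>i. i<n \<Longrightarrow> \<exists>v::nat\<Rightarrow>complex. (\<exists>j<n. v j \<noteq> 0) \<and> (\<forall>k<n. (\<Sum>j<n. A k j * v j) = B $$ (i,i) * v k)"
    using schur_nat[of n A] by blast
  have neg: "Re (B $$ (i,i)) < 0" if i: "i < n" for i
  proof -
    obtain v where v: "\<exists>j<n. v j \<noteq> 0" "\<And>k. k<n \<Longrightarrow> (\<Sum>j<n. A k j * v j) = B $$ (i,i) * v k"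
      using ev[OF i] by blast
    define vt :: "complex^'n" where "vt = (\<chi> k. v (to k))"
    have "vt \<noteq> 0"
    proof
      assume "vt = 0"
      obtain j where "j < n" "v j \<noteq> 0" using v(1) by blast
      then have "vt $ fr j \<noteq> 0" by (simp add: vt_def ft(2))
      then show False using \<open>vt = 0\<close> by simp
    qed
    moreover have "cmat M *v vt = B $$ (i,i) *s vt"
    proof -
      have "(cmat M *v vt) $ k = (B $$ (i,i) *s vt) $ k" for k
      proof -
      have "(cmat M *v vt) $ k = (\<Sum>k'\<in>UNIV. complex_of_real (M $ k $ fr (to k')) * v (to k'))"
        by (simp add: matrix_vector_mult_def cmat_def vt_def ft(3))
      also have "\<dots> = (\<Sum>j<n. complex_of_real (M $ k $ fr j) * v j)"
        by (rule reidx)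
      also have "\<dots> = (\<Sum>j<n. A (to k) j * v j)" by (simp add: A_def ft(3))
      also have "\<dots> = B $$ (i,i) * v (to k)" using v(2) ft(4) by blast
      finally show "(cmat M *v vt) $ k = (B $$ (i,i) *s vt) $ k" by (simp add: vt_def)
      qed
      then show ?thesis by (simp add: Finite_Cartesian_Product.vec_eq_iff)
    qed
    ultimately show ?thesis using H by blast
  qed
  define sg0 where "sg0 = Min ((\<lambda>i. - Re (B $$ (i,i))) ` {..<n})"
  have sg0: "sg0 > 0"
  proof -
    have "sg0 \<in> (\<lambda>i. - Re (B $$ (i,i))) ` {..<n}" unfolding sg0_def using n0 by (intro Min_in) auto
    then show ?thesis using neg by auto
  qed
  have diag: "\<forall>i<n. Re (B $$ (i,i)) \<le> - sg0"
  proof (intro allI impI)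
    fix i assume "i < n"
    then have "sg0 \<le> - Re (B $$ (i,i))" unfolding sg0_def by (intro Min_le) auto
    then show "Re (B $$ (i,i)) \<le> - sg0" by simp
  qed
  obtain \<epsilon> where e: "\<epsilon> > 0" "\<epsilon> \<le> 1" and tri: "\<And>w::nat\<Rightarrow>complex.
     Re (\<Sum>i<n. cnj (w i) * (\<Sum>j<n. B $$ (i,j) * of_real (\<epsilon>^(j-i)) * w j))
       \<le> -(sg0/2) * (\<Sum>i<n. (cmod (w i))\<^sup>2)"
    using tri_ineq[OF BPQ(1) BPQ(4) sg0 diag] by blast
  define Bt where "Bt i j = B $$ (i,j) * of_real (\<epsilon>^(j-i))" for i j
  define S where "S i j = of_real ((1/\<epsilon>)^i) * Q $$ (i,j)" for i j
  define T where "T i j = P $$ (i,j) * of_real (\<epsilon>^j)" for i j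
  have QA: "Q * Matrix.mat n n (\<lambda>(i,j). A i j) = B * Q"
  proof -
    have "Q * (P * B * Q) = (Q * P) * B * Q" using BPQ(1-3) by (simp add: assoc_mult_mat[of _ n n _ n _ n])
    also have "\<dots> = B * Q" using BPQ(1,3,6) by simp
    finally show ?thesis using BPQ(7) by simp
  qed
  have I1: "(\<Sum>k<n. S i k * A k j) = (\<Sum>k<n. Bt i k * S k j)" if ij: "i < n" "j < n" for i j
  proof -
    have "(Q * Matrix.mat n n (\<lambda>(i,j). A i j)) $$ (i,j) = (B * Q) $$ (i,j)" using QA by simp
    then have qa: "(\<Sum>k<n. Q $$ (i,k) * A k j) = (\<Sum>k<n. B $$ (i,k) * Q $$ (k,j))"
      using ij BPQ(1,3) by (simp add: scalar_prod_def atLeast0LessThan)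
    have "(\<Sum>k<n. S i k * A k j) = of_real ((1/\<epsilon>)^i) * (\<Sum>k<n. Q $$ (i,k) * A k j)"
      by (simp add: S_def sum_distrib_left mult.assoc)
    also have "\<dots> = (\<Sum>k<n. of_real ((1/\<epsilon>)^i) * (B $$ (i,k) * Q $$ (k,j)))"
      by (simp add: qa sum_distrib_left)
    also have "\<dots> = (\<Sum>k<n. Bt i k * S k j)"
    proof (rule sum.cong[OF refl])
      fix k assume k: "k \<in> {..<n}"
      show "of_real ((1/\<epsilon>)^i) * (B $$ (i,k) * Q $$ (k,j)) = Bt i k * S k j"
      proof (cases "k < i")
        case True
        then have "B $$ (i,k) = 0" using BPQ(1,4) ij by (auto simp: upper_triangular_def)
        then show ?thesis by (simp add: Bt_def)
      next
        case False
        then have "\<epsilon>^(k-i) * (1/\<epsilon>)^k = (1/\<epsilon>)^i" using e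
          by (simp add: power_diff power_one_over field_simps)
        then have "(of_real (\<epsilon>^(k-i)) * of_real ((1/\<epsilon>)^k) :: complex) = of_real ((1/\<epsilon>)^i)"
          by (simp only: of_real_mult[symmetric])
        then show ?thesis unfolding Bt_def S_def by (rule ring4)
      qed
    qed
    finally show ?thesis .
  qed
  have I2: "(\<Sum>k<n. T i k * S k j) = (if i = j then 1 else 0)" if ij: "i < n" "j < n" for i j
  proof -
    have "(\<Sum>k<n. T i k * S k j) = (\<Sum>k<n. P $$ (i,k) * Q $$ (k,j))"
    proof (rule sum.cong[OF refl])
      fix k
      have "\<epsilon>^k * (1/\<epsilon>)^k = 1" using e by (simp add: power_mult_distrib[symmetric])
      then have "(of_real (\<epsilon>^k) * of_real ((1/\<epsilon>)^k) :: complex) = 1"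
        by (simp only: of_real_mult[symmetric] of_real_1)
      from ring4[OF this, of "P $$ (i,k)" "Q $$ (k,j)"]
      show "T i k * S k j = P $$ (i,k) * Q $$ (k,j)" unfolding T_def S_def by simp
    qed
    also have "\<dots> = (P * Q) $$ (i,j)"
      using ij BPQ(2,3) by (simp add: scalar_prod_def atLeast0LessThan)
    also have "\<dots> = (if i = j then 1 else 0)" using BPQ(5) ij by simp
    finally show ?thesis .
  qed
  define ce where "ce e j = complex_of_real (e $ fr j)" for e :: "real^'n" and j
  define w where "w e i = (\<Sum>j<n. S i j * ce e j)" for e :: "real^'n" and i
  define Lr :: "nat \<Rightarrow> real^'n" where "Lr i = (\<chi> k. Re (S i (to k)))" for i
  define Li :: "nat \<Rightarrow> real^'n" where "Li i = (\<chi> k. Im (S i (to k)))" for i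
  have F1: "Lr i \<bullet> e = Re (w e i) \<and> Li i \<bullet> e = Im (w e i)" for i e
  proof -
    have "Lr i \<bullet> e = (\<Sum>k\<in>UNIV. Re (S i (to k)) * e $ fr (to k))"
      by (simp add: inner_vec_def Lr_def ft(3))
    also have "\<dots> = (\<Sum>j<n. Re (S i j) * e $ fr j)" by (rule reidx)
    also have "\<dots> = Re (w e i)" by (simp add: w_def ce_def Re_sum)
    finally have 1: "Lr i \<bullet> e = Re (w e i)" .
    have "Li i \<bullet> e = (\<Sum>k\<in>UNIV. Im (S i (to k)) * e $ fr (to k))"
      by (simp add: inner_vec_def Li_def ft(3))
    also have "\<dots> = (\<Sum>j<n. Im (S i j) * e $ fr j)" by (rule reidx)
    also have "\<dots> = Im (w e i)" by (simp add: w_def ce_def Im_sum)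
    finally show ?thesis using 1 by simp
  qed
  have F2: "ce (M *v e) j = (\<Sum>l<n. A j l * ce e l)" for e j
  proof -
    have "(M *v e) $ fr j = (\<Sum>k\<in>UNIV. M $ fr j $ fr (to k) * e $ fr (to k))"
      by (simp add: matrix_vector_mult_def ft(3))
    also have "\<dots> = (\<Sum>l<n. M $ fr j $ fr l * e $ fr l)" by (rule reidx)
    finally show ?thesis by (simp add: ce_def A_def)
  qed
  have F3: "w (M *v e) i = (\<Sum>k<n. Bt i k * w e k)" if i: "i < n" for e i
  proof -
    have "w (M *v e) i = (\<Sum>j<n. \<Sum>l<n. S i j * (A j l * ce e l))"
      by (simp add: w_def F2 sum_distrib_left)
    also have "\<dots> = (\<Sum>l<n. \<Sum>j<n. S i j * A j l * ce e l)"
      by (subst sum.swap) (simp add: mult.assoc)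
    also have "\<dots> = (\<Sum>l<n. (\<Sum>j<n. S i j * A j l) * ce e l)"
      by (simp add: sum_distrib_right)
    also have "\<dots> = (\<Sum>l<n. (\<Sum>k<n. Bt i k * S k l) * ce e l)"
      using I1[OF i] by simp
    also have "\<dots> = (\<Sum>k<n. \<Sum>l<n. Bt i k * (S k l * ce e l))"
      by (simp add: sum_distrib_right mult.assoc) (subst sum.swap, simp)
    also have "\<dots> = (\<Sum>k<n. Bt i k * w e k)" by (simp add: w_def sum_distrib_left)
    finally show ?thesis .
  qed
  have F4: "ce e j = (\<Sum>m<n. T j m * w e m)" if j: "j < n" for e j
  proof -
    have "(\<Sum>m<n. T j m * w e m) = (\<Sum>m<n. \<Sum>l<n. T j m * (S m l * ce e l))"
      by (simp add: w_def sum_distrib_left)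
    also have "\<dots> = (\<Sum>l<n. (\<Sum>m<n. T j m * S m l) * ce e l)"
      by (subst sum.swap) (simp add: sum_distrib_right mult.assoc)
    also have "\<dots> = (\<Sum>l<n. (if j = l then 1 else 0) * ce e l)"
      using I2[OF j] by simp
    also have "\<dots> = (\<Sum>l<n. if l = j then ce e l else 0)" by (intro sum.cong) auto
    also have "\<dots> = ce e j" using j by simp
    finally show ?thesis by simp
  qed
  define tsum where "tsum = (\<Sum>j<n. \<Sum>m<n. cmod (T j m))"
  have ts0: "tsum \<ge> 0" unfolding tsum_def by (intro sum_nonneg) auto
  define c1 where "c1 = 1 / (tsum\<^sup>2 + 1)"
  have V: "(\<Sum>i<n. (Lr i \<bullet> e)\<^sup>2 + (Li i \<bullet> e)\<^sup>2) = (\<Sum>i<n. (cmod (w e i))\<^sup>2)" for e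
    using F1 by (simp add: cmod_power2)
  have low: "c1 * (norm e)\<^sup>2 \<le> (\<Sum>i<n. (Lr i \<bullet> e)\<^sup>2 + (Li i \<bullet> e)\<^sup>2)" for e
  proof -
    define VV where "VV = (\<Sum>i<n. (cmod (w e i))\<^sup>2)"
    have VV0: "VV \<ge> 0" unfolding VV_def by (intro sum_nonneg) auto
    have wm: "cmod (w e m) \<le> sqrt VV" if "m < n" for m
      using that unfolding VV_def by (intro real_le_rsqrt member_le_sum) auto
    have ej: "\<bar>e $ fr j\<bar> \<le> (\<Sum>m<n. cmod (T j m)) * sqrt VV" if j: "j < n" for j
    proof -
      have "\<bar>e $ fr j\<bar> = cmod (ce e j)" by (simp add: ce_def)
      also have "\<dots> \<le> (\<Sum>m<n. cmod (T j m) * cmod (w e m))"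
        unfolding F4[OF j] by (rule order_trans[OF norm_sum]) (simp add: norm_mult)
      also have "\<dots> \<le> (\<Sum>m<n. cmod (T j m) * sqrt VV)"
        using wm by (intro sum_mono mult_left_mono) auto
      finally show ?thesis by (simp add: sum_distrib_right)
    qed
    have "norm e \<le> (\<Sum>k\<in>UNIV. \<bar>e $ fr (to k)\<bar>)" using norm_le_l1_cart[of e] by (simp add: ft(3))
    also have "\<dots> = (\<Sum>j<n. \<bar>e $ fr j\<bar>)" by (rule reidx)
    also have "\<dots> \<le> (\<Sum>j<n. (\<Sum>m<n. cmod (T j m)) * sqrt VV)"
      using ej by (intro sum_mono) auto
    also have "\<dots> = tsum * sqrt VV" by (simp add: tsum_def sum_distrib_right)
    finally have ne: "norm e \<le> tsum * sqrt VV" .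
    have "(norm e)\<^sup>2 \<le> (tsum * sqrt VV)\<^sup>2" using ne by (intro power_mono) auto
    also have "\<dots> = tsum\<^sup>2 * VV" using VV0 by (simp add: power_mult_distrib)
    finally have "(norm e)\<^sup>2 \<le> tsum\<^sup>2 * VV" .
    then have "c1 * (norm e)\<^sup>2 \<le> c1 * (tsum\<^sup>2 * VV)" by (intro mult_left_mono) (auto simp: c1_def)
    also have "\<dots> = VV * (tsum\<^sup>2 / (tsum\<^sup>2 + 1))" by (simp add: c1_def field_simps)
    also have "\<dots> \<le> VV * 1"
    proof (intro mult_left_mono VV0)
      have "tsum\<^sup>2 \<le> tsum\<^sup>2 + 1" by simp
      then show "tsum\<^sup>2 / (tsum\<^sup>2 + 1) \<le> 1" by (subst divide_le_eq_1) (auto intro: add_nonneg_pos)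
    qed
    finally show ?thesis using V[of e] VV_def by simp
  qed
  have der: "(\<Sum>i<n. (Lr i \<bullet> e) * (Lr i \<bullet> (M *v e)) + (Li i \<bullet> e) * (Li i \<bullet> (M *v e)))
        \<le> - (sg0/2) * (\<Sum>i<n. (Lr i \<bullet> e)\<^sup>2 + (Li i \<bullet> e)\<^sup>2)" for e
  proof -
    have "(\<Sum>i<n. (Lr i \<bullet> e) * (Lr i \<bullet> (M *v e)) + (Li i \<bullet> e) * (Li i \<bullet> (M *v e)))
        = Re (\<Sum>i<n. cnj (w e i) * w (M *v e) i)"
      using F1 by (simp add: Re_sum)
    also have "\<dots> = Re (\<Sum>i<n. cnj (w e i) * (\<Sum>k<n. B $$ (i,k) * of_real (\<epsilon>^(k-i)) * w e k))"
      using F3 by (simp add: Bt_def)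
    also have "\<dots> \<le> -(sg0/2) * (\<Sum>i<n. (cmod (w e i))\<^sup>2)" by (rule tri)
    finally show ?thesis using V[of e] by simp
  qed
  have c1: "c1 > 0" unfolding c1_def by (simp add: add_nonneg_pos)
  have sg2: "sg0/2 > 0" using sg0 by simp
  have P1: "\<forall>e. c1 * (norm e)\<^sup>2 \<le> (\<Sum>i<n. (Lr i \<bullet> e)\<^sup>2 + (Li i \<bullet> e)\<^sup>2)" using low by blast
  have P2: "\<forall>e. (\<Sum>i<n. (Lr i \<bullet> e) * (Lr i \<bullet> (M *v e)) + (Li i \<bullet> e) * (Li i \<bullet> (M *v e)))
        \<le> - (sg0/2) * (\<Sum>i<n. (Lr i \<bullet> e)\<^sup>2 + (Li i \<bullet> e)\<^sup>2)" using der by blast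
  show ?thesis unfolding n_def[symmetric] using c1 sg2 P1 P2 by blast
qed


(* ---- part Decay ---- *)


lemma sum_pairs: "(\<Sum>k<2*(n::nat). (f::nat \<Rightarrow> 'a::comm_monoid_add) k) = (\<Sum>i<n. f (2*i) + f (2*i+1))"
  by (induction n) (simp_all add: lessThan_Suc add_ac)

lemma stab_decay:
  fixes A :: "real^'n^'n" and B :: "real^'m^'n"
  assumes "stabilisable A B"
  shows "\<exists>(K::real^'n^'m) C sg. C > 0 \<and> sg > 0 \<and>
     (\<forall>v t. t \<ge> 0 \<longrightarrow> norm (Phi (A + B ** K) t v) \<le> C * exp (- sg * t) * norm v)"
proof -
  obtain K :: "real^'n^'m" where K: "\<forall>(\<mu>::complex) (v::complex^'n).
      v \<noteq> 0 \<and> cmat (A + B ** K) *v v = \<mu> *s v \<longrightarrow> Re \<mu> < 0"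
    using assms unfolding stabilisable_def by blast
  define M where "M = A + B ** K"
  obtain Lr Li :: "nat \<Rightarrow> real^'n" and c1 sg where lp: "c1 > 0" "sg > 0"
    "\<And>e. c1 * (norm e)\<^sup>2 \<le> (\<Sum>i<CARD('n). (Lr i \<bullet> e)\<^sup>2 + (Li i \<bullet> e)\<^sup>2)"
    "\<And>e. (\<Sum>i<CARD('n). (Lr i \<bullet> e) * (Lr i \<bullet> (M *v e)) + (Li i \<bullet> e) * (Li i \<bullet> (M *v e)))
        \<le> - sg * (\<Sum>i<CARD('n). (Lr i \<bullet> e)\<^sup>2 + (Li i \<bullet> e)\<^sup>2)"
    using lyap_pairs[of M] K unfolding M_def by blast
  define L where "L k = (if even k then Lr (k div 2) else Li (k div 2))" for k
  define N where "N = 2 * CARD('n)"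
  have LS: "(\<Sum>k<N. f (L k)) = (\<Sum>i<CARD('n). f (Lr i) + f (Li i))" for f :: "real^'n \<Rightarrow> real"
    unfolding N_def sum_pairs L_def by simp
  define c2 where "c2 = (\<Sum>k<N. norm (L k) ^ 2)"
  have c20: "c2 \<ge> 0" unfolding c2_def by (intro sum_nonneg) auto
  have up: "(\<Sum>k<N. (L k \<bullet> e)\<^sup>2) \<le> c2 * (norm e)\<^sup>2" for e
  proof -
    have "(L k \<bullet> e)\<^sup>2 \<le> norm (L k) ^ 2 * (norm e)\<^sup>2" for k
    proof -
      have "\<bar>L k \<bullet> e\<bar> \<le> norm (L k) * norm e" by (rule Cauchy_Schwarz_ineq2)
      then have "\<bar>L k \<bullet> e\<bar>\<^sup>2 \<le> (norm (L k) * norm e)\<^sup>2" by (intro power_mono) auto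
      then show ?thesis by (simp add: power_mult_distrib)
    qed
    then have "(\<Sum>k<N. (L k \<bullet> e)\<^sup>2) \<le> (\<Sum>k<N. norm (L k) ^ 2 * (norm e)\<^sup>2)" by (intro sum_mono)
    then show ?thesis by (simp add: c2_def sum_distrib_right)
  qed
  have H: "(\<Sum>k<N. (L k \<bullet> e) * (L k \<bullet> (M *v e))) \<le> - sg * (\<Sum>k<N. (L k \<bullet> e)^2)" for e
    using lp(4)[of e] LS[of "\<lambda>l. (l \<bullet> e) * (l \<bullet> (M *v e))"] LS[of "\<lambda>l. (l \<bullet> e)^2"] by simp
  define C where "C = sqrt (c2 / c1) + 1"
  have C0: "C > 0" unfolding C_def using c20 lp(1) by (intro add_nonneg_pos) auto
  have "norm (Phi M t v) \<le> C * exp (- sg * t) * norm v" if t: "t \<ge> 0" for v t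
  proof -
    have dec: "(\<Sum>k<N. (L k \<bullet> Phi M t v)^2) \<le> exp (-(2 * sg * t)) * (\<Sum>k<N. (L k \<bullet> v)^2)"
      by (rule Phi_decay[OF _ H t]) (use lp in auto)
    have "c1 * (norm (Phi M t v))\<^sup>2 \<le> (\<Sum>k<N. (L k \<bullet> Phi M t v)^2)"
      using lp(3)[of "Phi M t v"] LS[of "\<lambda>l. (l \<bullet> Phi M t v)^2"] by simp
    also have "\<dots> \<le> exp (-(2 * sg * t)) * (c2 * (norm v)\<^sup>2)"
      using dec up[of v] by (meson exp_ge_zero mult_left_mono order_trans)
    finally have "(norm (Phi M t v))\<^sup>2 \<le> (c2 / c1) * (exp (- sg * t) * norm v)\<^sup>2"
      using lp(1) by (simp add: field_simps power_mult_distrib exp_minus power2_eq_square exp_add[symmetric])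
    also have "\<dots> = (sqrt (c2/c1) * (exp (- sg * t) * norm v))\<^sup>2"
      using c20 lp(1) by (simp add: power_mult_distrib)
    finally have "norm (Phi M t v) \<le> sqrt (c2/c1) * (exp (- sg * t) * norm v)"
      by (rule power2_le_imp_le) (use c20 lp(1) in auto)
    also have "\<dots> \<le> C * (exp (- sg * t) * norm v)"
      unfolding C_def by (intro mult_right_mono) auto
    finally show ?thesis by (simp add: mult.assoc)
  qed
  then show ?thesis using C0 lp(2) unfolding M_def by blast
qed


(* ---- part Main1 ---- *)


definition kk :: "real \<Rightarrow> real \<Rightarrow> nat" where "kk T t = nat \<lfloor>t / T\<rfloor>"

lemma kk_bounds:
  assumes "T > 0" "t \<ge> 0"
  shows "real (kk T t) * T \<le> t" "t < (real (kk T t) + 1) * T"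
proof -
  have f0: "\<lfloor>t / T\<rfloor> \<ge> 0" using assms by simp
  then have r: "real (kk T t) = of_int \<lfloor>t / T\<rfloor>" unfolding kk_def by simp
  have "of_int \<lfloor>t / T\<rfloor> * T \<le> (t / T) * T"
    by (rule mult_right_mono) (use assms in \<open>auto intro: of_int_floor_le\<close>)
  then show "real (kk T t) * T \<le> t" using assms unfolding r by simp
  have "(t / T) * T < (of_int \<lfloor>t / T\<rfloor> + 1) * T"
    by (rule mult_strict_right_mono) (use assms in \<open>auto intro: real_of_int_floor_add_one_gt\<close>)
  then show "t < (real (kk T t) + 1) * T" using assms unfolding r by simp
qed

lemma kk_eq:
  assumes "T > 0" "0 \<le> s" "s < T"
  shows "kk T (real k * T + s) = k"
proof -
  have "(real k * T + s) / T = real k + s / T" using assms by (simp add: field_simps)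
  moreover have "\<lfloor>real k + s / T\<rfloor> = int k"
    using assms by (intro floor_unique) (auto simp: field_simps)
  ultimately show ?thesis unfolding kk_def by simp
qed

lemma matvec_bound_gen: "\<exists>c>0. \<forall>w. norm ((N::real^'a^'b) *v w) \<le> c * norm w"
proof -
  have "bounded_linear (\<lambda>w. N *v w)" by simp
  then obtain K where "K > 0" "\<And>x. norm (N *v x) \<le> norm x * K"
    using bounded_linear.pos_bounded by blast
  then show ?thesis by (metis mult.commute)
qed

definition ee :: "real^'n^'n \<Rightarrow> real \<Rightarrow> (nat \<Rightarrow> real) \<Rightarrow> (real \<Rightarrow> real^'n) \<Rightarrow> nat \<Rightarrow> real^'n" where
  "ee M T a xy = rec_nat 0 (\<lambda>k ek. Phi M T ek + (a k - a (Suc k)) *\<^sub>R xy (real (Suc k) * T))"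

lemma ee_simps: "ee M T a xy 0 = 0"
  "ee M T a xy (Suc k) = Phi M T (ee M T a xy k) + (a k - a (Suc k)) *\<^sub>R xy (real (Suc k) * T)"
  by (simp_all add: ee_def)


(* ---- part Main2 ---- *)


lemma convex_pair:
  assumes "convex E" "(x1, u1) \<in> E" "(x2, u2) \<in> E" "0 \<le> \<alpha>" "\<alpha> \<le> 1"
  shows "(\<alpha> *\<^sub>R x1 + (1 - \<alpha>) *\<^sub>R x2, \<alpha> *\<^sub>R u1 + (1 - \<alpha>) *\<^sub>R u2) \<in> E"
proof -
  have "\<alpha> *\<^sub>R (x1, u1) + (1 - \<alpha>) *\<^sub>R (x2, u2) \<in> E"
    using assms by (intro convexD) auto
  then show ?thesis by simp
qed

context
  fixes A :: "real^'n^'n" and B :: "real^'m^'n" and K :: "real^'n^'m"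
    and E :: "((real^'n) \<times> (real^'m)) set" and U :: "(real^'m) set"
    and C sg T lam rho RE kK r :: real
    and y :: "real^'n" and uy :: "real \<Rightarrow> real^'m" and xy :: "real \<Rightarrow> real^'n"
  assumes dec: "\<forall>v t. t \<ge> 0 \<longrightarrow> norm (Phi (A + B ** K) t v) \<le> C * exp (- sg * t) * norm v"
    and C0: "C > 0" and sg0: "sg > 0" and T0: "T > 0" and CT: "C * exp (- sg * T) \<le> 1/2"
    and lam: "0 \<le> lam" "lam < 1" and rho: "3/4 \<le> rho" "rho < 1"
    and RE: "\<forall>p\<in>E. norm (fst p) \<le> RE \<and> norm (snd p) \<le> RE" and RE0: "RE \<ge> 0"
    and kK: "\<forall>w. norm (K *v w) \<le> kK * norm w" and kK0: "kK \<ge> 0"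
    and r0: "r > 0" and Eball: "\<forall>p. norm (fst p) + norm (snd p) < r \<longrightarrow> p \<in> E"
    and Uball: "\<forall>w. norm w < r \<longrightarrow> w \<in> U"
    and small: "4 * C * (1 - rho) * RE * (1 + kK) \<le> (1 - lam) * r / 2"
    and Econv: "convex E" and Uconv: "convex U"
    and yL: "Linf_loc uy" and yT: "is_traj A B y uy xy" and yC: "\<forall>t\<ge>0. (xy t, uy t) \<in> E \<and> uy t \<in> U"
begin

definition "aa k = lam * rho^k"
definition "MM = A + B ** K"
definition "e = ee MM T aa xy"
definition "bet = 4 * lam * (1 - rho) * RE"
definition "xx t = aa (kk T t) *\<^sub>R xy t + Phi MM (t - real (kk T t) * T) (e (kk T t))"
definition "uu t = aa (kk T t) *\<^sub>R uy t + K *v Phi MM (t - real (kk T t) * T) (e (kk T t))"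

lemma rho0: "rho > 0" using rho by simp

lemma aa_props: "0 \<le> aa k" "aa k \<le> lam" "aa k - aa (Suc k) = lam * rho^k * (1 - rho)"
proof -
  show "0 \<le> aa k" unfolding aa_def using lam rho0 by simp
  have "rho^k \<le> 1" using rho by (intro power_le_one) auto
  then show "aa k \<le> lam" unfolding aa_def using lam by (simp add: mult_left_le)
  show "aa k - aa (Suc k) = lam * rho^k * (1 - rho)" unfolding aa_def by (simp add: algebra_simps)
qed

lemma beta0: "bet \<ge> 0" unfolding bet_def using lam rho RE0 by (intro mult_nonneg_nonneg) auto

lemma xy_E: "t \<ge> 0 \<Longrightarrow> norm (xy t) \<le> RE \<and> norm (uy t) \<le> RE"
  using yC RE by fastforce

lemma Phi_dec: "s \<ge> 0 \<Longrightarrow> norm (Phi MM s v) \<le> C * norm v"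
proof -
  assume s: "s \<ge> 0"
  have "norm (Phi MM s v) \<le> C * exp (- sg * s) * norm v" using dec s unfolding MM_def by blast
  also have "\<dots> \<le> C * 1 * norm v" using s sg0 C0 by (intro mult_right_mono mult_left_mono) auto
  finally show ?thesis by simp
qed

lemma e_bound: "norm (e k) \<le> bet * rho^k"
proof (induction k)
  case 0 then show ?case using beta0 by (simp add: e_def ee_simps)
next
  case (Suc k)
  have d0: "aa k - aa (Suc k) \<ge> 0" unfolding aa_props(3) using lam rho rho0 by simp
  have "norm (e (Suc k)) \<le> norm (Phi MM T (e k)) + norm ((aa k - aa (Suc k)) *\<^sub>R xy (real (Suc k) * T))"
    unfolding e_def ee_simps by (rule norm_triangle_ineq)
  also have "\<dots> = norm (Phi MM T (e k)) + (aa k - aa (Suc k)) * norm (xy (real (Suc k) * T))"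
    using d0 by simp
  also have "\<dots> \<le> C * exp (- sg * T) * norm (e k) + lam * rho^k * (1 - rho) * RE"
  proof (intro add_mono)
    show "norm (Phi MM T (e k)) \<le> C * exp (- sg * T) * norm (e k)"
      using dec T0 unfolding MM_def by auto
    have "norm (xy (real (Suc k) * T)) \<le> RE" using xy_E T0 by simp
    then show "(aa k - aa (Suc k)) * norm (xy (real (Suc k) * T)) \<le> lam * rho^k * (1 - rho) * RE"
      unfolding aa_props(3) using lam rho0 rho by (intro mult_left_mono) auto
  qed
  also have "\<dots> \<le> 1/2 * (bet * rho^k) + lam * rho^k * (1 - rho) * RE"
    by (rule add_mono[OF mult_mono[OF CT Suc.IH] order_refl]) auto
  also have "\<dots> = 3/4 * (bet * rho^k)" unfolding bet_def by (simp add: algebra_simps)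
  also have "\<dots> \<le> rho * (bet * rho^k)"
    using rho beta0 rho0 by (intro mult_right_mono) auto
  finally show ?case by (simp add: mult_ac)
qed

lemma Phi_e_bound: "s \<ge> 0 \<Longrightarrow> norm (Phi MM s (e k)) \<le> C * bet * rho^k"
proof -
  assume s: "s \<ge> 0"
  have "norm (Phi MM s (e k)) \<le> C * norm (e k)" by (rule Phi_dec[OF s])
  also have "\<dots> \<le> C * (bet * rho^k)" using e_bound C0 by (intro mult_left_mono) auto
  finally show ?thesis by (simp add: mult.assoc)
qed

lemma kkT: "t \<ge> 0 \<Longrightarrow> t - real (kk T t) * T \<ge> 0"
  using kk_bounds[OF T0] by simp

lemma small2: "(1 + kK) * (C * bet) \<le> lam * ((1 - lam) * r / 2)"
proof -
  have "(1 + kK) * (C * bet) = lam * (4 * C * (1 - rho) * RE * (1 + kK))"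
    unfolding bet_def by (simp add: algebra_simps)
  also have "\<dots> \<le> lam * ((1 - lam) * r / 2)" using small lam by (intro mult_left_mono) auto
  finally show ?thesis .
qed

lemma constr:
  assumes t: "t \<ge> 0"
  shows "(xx t, uu t) \<in> E \<and> uu t \<in> U"
proof -
  define k where "k = kk T t"
  define \<alpha> where "\<alpha> = aa k"
  define p where "p = Phi MM (t - real k * T) (e k)"
  have a: "0 \<le> \<alpha>" "\<alpha> \<le> lam" using aa_props unfolding \<alpha>_def by auto
  have a1: "1 - \<alpha> > 0" using a lam by simp
  have pb: "norm p \<le> C * bet" 
  proof -
    have "norm p \<le> C * bet * rho^k" unfolding p_def k_def by (rule Phi_e_bound[OF kkT[OF t]])
    also have "\<dots> \<le> C * bet * 1" using C0 beta0 rho rho0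
      by (intro mult_left_mono power_le_one) auto
    finally show ?thesis by simp
  qed
  have Kp: "norm (K *v p) \<le> kK * norm p" using kK by blast
  have sum_small: "(norm p + norm (K *v p)) / (1 - \<alpha>) < r"
  proof -
    have "norm p + norm (K *v p) \<le> (1 + kK) * norm p" using Kp by (simp add: algebra_simps)
    also have "\<dots> \<le> (1 + kK) * (C * bet)" using pb kK0 by (intro mult_left_mono) auto
    finally have "norm p + norm (K *v p) \<le> (1 + kK) * (C * bet)" .
    also have "\<dots> \<le> lam * ((1 - lam) * r / 2)" by (rule small2)
    finally have 1: "norm p + norm (K *v p) \<le> lam * ((1 - lam) * r / 2)" .
    have X: "(1 - lam) * r / 2 > 0" using lam r0 by (intro divide_pos_pos mult_pos_pos) auto
    have "lam * ((1 - lam) * r / 2) \<le> 1 * ((1 - lam) * r / 2)" using lam X by (intro mult_right_mono) auto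
    also have "\<dots> < (1 - lam) * r" using X by linarith
    finally have "lam * ((1 - lam) * r / 2) < (1 - lam) * r" .
    also have "\<dots> \<le> (1 - \<alpha>) * r" using a r0 by (intro mult_right_mono) auto
    finally have "norm p + norm (K *v p) < (1 - \<alpha>) * r" using 1 by simp
    then show ?thesis using a1 by (simp add: divide_less_eq mult.commute)
  qed
  define q1 where "q1 = (1 / (1 - \<alpha>)) *\<^sub>R p"
  define q2 where "q2 = (1 / (1 - \<alpha>)) *\<^sub>R (K *v p)"
  have "norm q1 + norm q2 = (norm p + norm (K *v p)) / (1 - \<alpha>)"
    unfolding q1_def q2_def using a1 by (simp add: add_divide_distrib)
  then have ql: "norm q1 + norm q2 < r" using sum_small by simp
  then have qE: "(q1, q2) \<in> E" using Eball by auto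
  have "norm q2 < r" using ql norm_ge_zero[of q1] by linarith
  then have qU: "q2 \<in> U" using Uball by auto
  have pE: "(xy t, uy t) \<in> E" and pU: "uy t \<in> U" using yC t by auto
  have a1': "\<alpha> \<le> 1" using a lam by simp
  have eq1: "(1 - \<alpha>) *\<^sub>R q1 = p" unfolding q1_def using a1 by simp
  have eq2: "(1 - \<alpha>) *\<^sub>R q2 = K *v p" unfolding q2_def using a1 by simp
  have "xx t = \<alpha> *\<^sub>R xy t + p" unfolding xx_def p_def \<alpha>_def k_def by simp
  then have xx: "xx t = \<alpha> *\<^sub>R xy t + (1 - \<alpha>) *\<^sub>R q1" using eq1 by simp
  have "uu t = \<alpha> *\<^sub>R uy t + K *v p" unfolding uu_def p_def \<alpha>_def k_def by simp
  then have uu: "uu t = \<alpha> *\<^sub>R uy t + (1 - \<alpha>) *\<^sub>R q2" using eq2 by simp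
  show ?thesis
    unfolding xx uu using convex_pair[OF Econv pE qE a(1) a1'] convexD[OF Uconv pU qU, of \<alpha> "1 - \<alpha>"] a a1'
    by auto
qed

lemma norms:
  assumes t: "t \<ge> 0"
  shows "norm (xx t) \<le> rho^(kk T t) * (lam * RE + C * bet * (1 + kK)) \<and>
         norm (uu t) \<le> rho^(kk T t) * (lam * RE + C * bet * (1 + kK))"
proof -
  define k where "k = kk T t"
  define p where "p = Phi MM (t - real k * T) (e k)"
  have pb: "norm p \<le> C * bet * rho^k" unfolding p_def k_def by (rule Phi_e_bound[OF kkT[OF t]])
  have ab: "norm (aa k *\<^sub>R xy t) \<le> lam * rho^k * RE"
    using xy_E[OF t] aa_props(1)[of k] lam rho0 by (simp add: aa_def mult_left_mono)
  have ab2: "norm (aa k *\<^sub>R uy t) \<le> lam * rho^k * RE"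
    using xy_E[OF t] aa_props(1)[of k] lam rho0 by (simp add: aa_def mult_left_mono)
  have Kp: "norm (K *v p) \<le> kK * (C * bet * rho^k)"
    using kK pb kK0 by (meson mult_left_mono order_trans)
  have pos: "0 \<le> C * bet * rho^k" using C0 beta0 rho0 by simp
  have "norm (xx t) \<le> norm (aa k *\<^sub>R xy t) + norm p"
    unfolding xx_def k_def[symmetric] p_def by (rule norm_triangle_ineq)
  also have "\<dots> \<le> lam * rho^k * RE + C * bet * rho^k" using ab pb by simp
  also have "\<dots> \<le> rho^k * (lam * RE + C * bet * (1 + kK))"
  proof -
    have eq: "rho^k * (lam * RE + C * bet * (1 + kK)) = lam * rho^k * RE + C * bet * rho^k + kK * (C * bet * rho^k)"
      by (simp add: algebra_simps)
    have "kK * (C * bet * rho^k) \<ge> 0" using pos kK0 by simp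
    then show ?thesis unfolding eq by linarith
  qed
  finally have 1: "norm (xx t) \<le> rho^k * (lam * RE + C * bet * (1 + kK))" .
  have "norm (uu t) \<le> norm (aa k *\<^sub>R uy t) + norm (K *v p)"
    unfolding uu_def k_def[symmetric] p_def by (rule norm_triangle_ineq)
  also have "\<dots> \<le> lam * rho^k * RE + kK * (C * bet * rho^k)" using ab2 Kp by simp
  also have "\<dots> \<le> rho^k * (lam * RE + C * bet * (1 + kK))"
  proof -
    have eq: "rho^k * (lam * RE + C * bet * (1 + kK)) = lam * rho^k * RE + C * bet * rho^k + kK * (C * bet * rho^k)"
      by (simp add: algebra_simps)
    show ?thesis unfolding eq using pos by linarith
  qed
  finally show ?thesis using 1 unfolding k_def by simp
qed

lemma fy_int: "t \<ge> 0 \<Longrightarrow> ((\<lambda>s. A *v xy s + B *v uy s) has_integral (xy t - y)) {0..t}"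
  using yT unfolding is_traj_def by blast

lemma xy0: "xy 0 = y"
proof -
  have 1: "((\<lambda>s. A *v xy s + B *v uy s) has_integral (xy 0 - y)) {0}" using fy_int[of 0] by simp
  have 2: "((\<lambda>s. A *v xy s + B *v uy s) has_integral 0) {0}" by (rule has_integral_refl(2))
  have "xy 0 - y = 0" by (rule has_integral_unique[OF 1 2])
  then show ?thesis by simp
qed

lemma fy_diff:
  assumes "0 \<le> c" "c \<le> d"
  shows "((\<lambda>s. A *v xy s + B *v uy s) has_integral (xy d - xy c)) {c..d}"
proof -
  let ?f = "\<lambda>s. A *v xy s + B *v uy s"
  have "?f integrable_on {0..d}" using fy_int[of d] assms by auto
  then have "?f integrable_on {c..d}" by (rule integrable_subinterval_real) (use assms in auto)
  then have J: "(?f has_integral integral {c..d} ?f) {c..d}" by (rule integrable_integral)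
  have "(?f has_integral (xy c - y + integral {c..d} ?f)) {0..d}"
    by (rule has_integral_combine[OF assms(1) assms(2) fy_int[OF assms(1)] J])
  moreover have "(?f has_integral (xy d - y)) {0..d}" using fy_int[of d] assms by simp
  ultimately have "xy c - y + integral {c..d} ?f = xy d - y" by (rule has_integral_unique)
  then have "integral {c..d} ?f = xy d - xy c" by (simp add: algebra_simps)
  then show ?thesis using J by simp
qed

lemma Phi_zero: "s \<ge> 0 \<Longrightarrow> Phi MM s 0 = 0"
  using Phi_dec[of s 0] by simp

lemma f_eq:
  assumes "kk T \<tau> = k"
  shows "A *v xx \<tau> + B *v uu \<tau> = aa k *\<^sub>R (A *v xy \<tau> + B *v uy \<tau>) + MM *v Phi MM (\<tau> - real k * T) (e k)"
proof -
  define p where "p = Phi MM (\<tau> - real k * T) (e k)"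
  have 1: "A *v xx \<tau> = aa k *\<^sub>R (A *v xy \<tau>) + A *v p"
    unfolding xx_def assms p_def by (simp add: matrix_vector_right_distrib matrix_vector_mult_scaleR)
  have 2: "B *v uu \<tau> = aa k *\<^sub>R (B *v uy \<tau>) + (B ** K) *v p"
    unfolding uu_def assms p_def by (simp add: matrix_vector_right_distrib matrix_vector_mult_scaleR matrix_vector_mul_assoc)
  have 3: "MM *v p = A *v p + (B ** K) *v p" unfolding MM_def by (rule matrix_vector_mult_add_rdistrib)
  show ?thesis unfolding 1 2 p_def[symmetric] 3 by (simp add: scaleR_right_distrib add_ac)
qed

lemma piece:
  assumes s: "0 \<le> s" "s \<le> T"
  shows "((\<lambda>\<tau>. A *v xx \<tau> + B *v uu \<tau>) has_integral
      (aa k *\<^sub>R (xy (real k * T + s) - xy (real k * T)) + (Phi MM s (e k) - e k))) {real k * T..real k * T + s}"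
proof -
  define c where "c = real k * T"
  have c0: "c \<ge> 0" unfolding c_def using T0 by simp
  have g: "((\<lambda>\<tau>. aa k *\<^sub>R (A *v xy \<tau> + B *v uy \<tau>) + MM *v Phi MM (\<tau> - c) (e k)) has_integral
      (aa k *\<^sub>R (xy (c + s) - xy c) + (Phi MM (c + s - c) (e k) - e k))) {c..c + s}"
    by (intro has_integral_add has_integral_cmul fy_diff Phi_integral) (use c0 s in auto)
  have "((\<lambda>\<tau>. A *v xx \<tau> + B *v uu \<tau>) has_integral
      (aa k *\<^sub>R (xy (c + s) - xy c) + (Phi MM (c + s - c) (e k) - e k))) {c..c + s}"
  proof (rule has_integral_spike_finite[OF _ _ g])
    show "finite {c + T}" by simp
    fix \<tau> assume \<tau>: "\<tau> \<in> {c..c + s} - {c + T}"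
    then have "\<tau> - c \<ge> 0" "\<tau> - c < T" using s by auto
    then have "kk T (real k * T + (\<tau> - c)) = k" by (intro kk_eq T0)
    then have "kk T \<tau> = k" unfolding c_def by simp
    from f_eq[OF this] show "A *v xx \<tau> + B *v uu \<tau> =
        aa k *\<^sub>R (A *v xy \<tau> + B *v uy \<tau>) + MM *v Phi MM (\<tau> - c) (e k)" unfolding c_def by simp
  qed
  then show ?thesis unfolding c_def by simp
qed

lemma traj_ind:
  "\<forall>s. 0 \<le> s \<longrightarrow> s \<le> T \<longrightarrow> ((\<lambda>\<tau>. A *v xx \<tau> + B *v uu \<tau>) has_integral
      (aa k *\<^sub>R xy (real k * T + s) + Phi MM s (e k) - lam *\<^sub>R y)) {0..real k * T + s}"
proof (induction k)
  case 0
  show ?case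
  proof (intro allI impI)
    fix s :: real assume s: "0 \<le> s" "s \<le> T"
    from piece[OF s, of 0] show "((\<lambda>\<tau>. A *v xx \<tau> + B *v uu \<tau>) has_integral
      (aa 0 *\<^sub>R xy (real 0 * T + s) + Phi MM s (e 0) - lam *\<^sub>R y)) {0..real 0 * T + s}"
      using Phi_zero[OF s(1)] by (simp add: e_def ee_simps xy0 aa_def algebra_simps)
  qed
next
  case (Suc k)
  show ?case
  proof (intro allI impI)
    fix s :: real assume s: "0 \<le> s" "s \<le> T"
    define c where "c = real (Suc k) * T"
    have ck: "c = real k * T + T" unfolding c_def by (simp add: algebra_simps)
    have c0: "0 \<le> c" unfolding c_def using T0 by simp
    have I1: "((\<lambda>\<tau>. A *v xx \<tau> + B *v uu \<tau>) has_integral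
      (aa k *\<^sub>R xy c + Phi MM T (e k) - lam *\<^sub>R y)) {0..c}"
      using Suc.IH T0 unfolding ck by auto
    have I2: "((\<lambda>\<tau>. A *v xx \<tau> + B *v uu \<tau>) has_integral
      (aa (Suc k) *\<^sub>R (xy (c + s) - xy c) + (Phi MM s (e (Suc k)) - e (Suc k)))) {c..c + s}"
      using piece[OF s, of "Suc k"] unfolding c_def .
    have eS: "e (Suc k) = Phi MM T (e k) + (aa k - aa (Suc k)) *\<^sub>R xy c"
      unfolding e_def ee_simps c_def by simp
    have "((\<lambda>\<tau>. A *v xx \<tau> + B *v uu \<tau>) has_integral
      ((aa k *\<^sub>R xy c + Phi MM T (e k) - lam *\<^sub>R y) +
       (aa (Suc k) *\<^sub>R (xy (c + s) - xy c) + (Phi MM s (e (Suc k)) - e (Suc k))))) {0..c + s}"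
      by (rule has_integral_combine[OF c0 _ I1 I2]) (use s in auto)
    moreover have "(aa k *\<^sub>R xy c + Phi MM T (e k) - lam *\<^sub>R y) +
       (aa (Suc k) *\<^sub>R (xy (c + s) - xy c) + (Phi MM s (e (Suc k)) - e (Suc k)))
       = aa (Suc k) *\<^sub>R xy (c + s) + Phi MM s (e (Suc k)) - lam *\<^sub>R y"
      unfolding eS by (simp add: algebra_simps)
    ultimately have "((\<lambda>\<tau>. A *v xx \<tau> + B *v uu \<tau>) has_integral
      (aa (Suc k) *\<^sub>R xy (c + s) + Phi MM s (e (Suc k)) - lam *\<^sub>R y)) {0..c + s}"
      by simp
    then show "((\<lambda>\<tau>. A *v xx \<tau> + B *v uu \<tau>) has_integral
      (aa (Suc k) *\<^sub>R xy (real (Suc k) * T + s) + Phi MM s (e (Suc k)) - lam *\<^sub>R y)) {0..real (Suc k) * T + s}"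
      unfolding c_def .
  qed
qed

lemma traj: "is_traj A B (lam *\<^sub>R y) uu xx"
  unfolding is_traj_def
proof (intro allI impI)
  fix t :: real assume t: "t \<ge> 0"
  define k where "k = kk T t"
  define s where "s = t - real k * T"
  have s: "0 \<le> s" "s \<le> T" using kk_bounds[OF T0 t] unfolding s_def k_def by (auto simp: algebra_simps)
  have tt: "real k * T + s = t" unfolding s_def by simp
  have "xx t = aa k *\<^sub>R xy t + Phi MM s (e k)" unfolding xx_def s_def k_def by simp
  then show "((\<lambda>s. A *v xx s + B *v uu s) has_integral (xx t - lam *\<^sub>R y)) {0..t}"
    using traj_ind[of k] s tt by auto
qed

lemma uu_meas: "uu \<in> borel_measurable (restrict_space lborel {0..})"
proof (rule measurable_piecewise_restrict2[where A="\<lambda>n. {real n * T..<(real n + 1) * T}"])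
  fix n :: nat
  show "{real n * T..<(real n + 1) * T} \<in> sets (restrict_space lborel {0..})"
  proof (subst sets_restrict_space_iff)
    have n0: "0 \<le> real n * T" using T0 by simp
    show "{real n * T..<(real n + 1) * T} \<subseteq> {0..} \<and> {real n * T..<(real n + 1) * T} \<in> sets lborel"
      using n0 by auto
  qed simp
next
  show "space (restrict_space lborel {0..}) = (\<Union>n. {real n * T..<(real n + 1) * T})"
  proof
    show "space (restrict_space lborel {0..}) \<subseteq> (\<Union>n. {real n * T..<(real n + 1) * T})"
    proof
      fix t :: real assume "t \<in> space (restrict_space lborel {0..})"
      then have t: "t \<ge> 0" by (simp add: space_restrict_space)
      show "t \<in> (\<Union>n. {real n * T..<(real n + 1) * T})"
        using kk_bounds[OF T0 t] by (intro UN_I[of "kk T t"]) auto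
    qed
    show "(\<Union>n. {real n * T..<(real n + 1) * T}) \<subseteq> space (restrict_space lborel {0..})"
      using T0 by auto (meson mult_nonneg_nonneg of_nat_0_le_iff order_trans less_imp_le)
  qed
next
  fix n :: nat
  define h where "h t = aa n *\<^sub>R uy t + K *v Phi MM (t - real n * T) (e n)" for t
  have muy: "uy \<in> borel_measurable (restrict_space lborel {0..})" using yL unfolding Linf_loc_def by blast
  have "continuous_on UNIV (\<lambda>t. K *v Phi MM (t - real n * T) (e n))"
  proof -
    have "continuous_on UNIV (\<lambda>t. Phi MM (t - real n * T) (e n))"
      by (rule continuous_on_compose2[OF Phi_cont[of UNIV MM "e n"]]) (auto intro!: continuous_intros)
    then show ?thesis by (rule bounded_linear.continuous_on[OF matrix_vector_mul_bounded_linear])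
  qed
  then have "(\<lambda>t. K *v Phi MM (t - real n * T) (e n)) \<in> borel_measurable borel"
    by (rule borel_measurable_continuous_onI)
  then have "(\<lambda>t. K *v Phi MM (t - real n * T) (e n)) \<in> borel_measurable (restrict_space lborel {0..})"
    by (intro measurable_restrict_space1) simp
  then have "h \<in> borel_measurable (restrict_space lborel {0..})"
    unfolding h_def using muy by (intro borel_measurable_add borel_measurable_scaleR) auto
  moreover have "\<forall>x\<in>{real n * T..<(real n + 1) * T}. uu x = h x"
  proof
    fix x assume x: "x \<in> {real n * T..<(real n + 1) * T}"
    then have "kk T (real n * T + (x - real n * T)) = n" by (intro kk_eq T0) (auto simp: algebra_simps)
    then have "kk T x = n" by simp
    then show "uu x = h x" unfolding uu_def h_def by simp
  qed
  ultimately show "\<exists>h \<in> borel_measurable (restrict_space lborel {0..}). \<forall>x\<in>{real n * T..<(real n + 1) * T}. uu x = h x"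
    by blast
qed

lemma uu_Linf: "Linf_loc uu"
  unfolding Linf_loc_def
proof (intro conjI uu_meas allI impI)
  fix T' :: real
  have "\<forall>t. t \<in> {0..T'} \<longrightarrow> norm (uu t) \<le> RE"
    using constr RE by fastforce
  then show "\<exists>Cu. AE t in lborel. t \<in> {0..T'} \<longrightarrow> norm (uu t) \<le> Cu"
    by (intro exI[of _ RE] AE_I2) auto
qed

lemma uu_adm: "uu \<in> adm_controls A B E U (lam *\<^sub>R y)"
  unfolding adm_controls_def using uu_Linf traj constr by blast

lemma exists_ctrl: "\<exists>u x. u \<in> adm_controls A B E U (lam *\<^sub>R y) \<and> is_traj A B (lam *\<^sub>R y) u x \<and>
   (\<forall>t\<ge>0. norm (x t) \<le> rho^(kk T t) * (lam * RE + C * (4 * lam * (1 - rho) * RE) * (1 + kK)) \<and>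
           norm (u t) \<le> rho^(kk T t) * (lam * RE + C * (4 * lam * (1 - rho) * RE) * (1 + kK)))"
  using uu_adm traj norms unfolding bet_def by blast

end

(* ---- part Cost ---- *)


lemma cost_bound:
  fixes g :: "real \<Rightarrow> real"
  assumes T: "T > 0" and q: "0 \<le> q" "q < 1" and Lc: "Lc \<ge> 0"
    and gb: "\<And>t. t \<ge> 0 \<Longrightarrow> g t \<le> Lc * q^(kk T t)"
  shows "(\<integral>\<^sup>+ t. indicator {0..} t * ennreal (g t) \<partial>lborel) \<le> ennreal (T * Lc / (1 - q))"
proof -
  define I where "I k = {real k * T..<(real k + 1) * T}" for k :: nat
  define F where "F k t = indicator (I k) t * ennreal (Lc * q^k)" for k t
  have pw: "indicator {0..} t * ennreal (g t) \<le> (\<Sum>k. F k t)" for t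
  proof (cases "t \<ge> 0")
    case False then show ?thesis by simp
  next
    case True
    define k0 where "k0 = kk T t"
    have tI: "t \<in> I k0" using kk_bounds[OF T True] unfolding I_def k0_def by auto
    have "indicator {0..} t * ennreal (g t) = ennreal (g t)" using True by simp
    also have "\<dots> \<le> ennreal (Lc * q^k0)" using gb[OF True] unfolding k0_def by (rule ennreal_leI)
    also have "\<dots> = F k0 t" using tI by (simp add: F_def)
    also have "\<dots> \<le> (\<Sum>k. F k t)"
      using sum_le_suminf[OF summableI, of "{k0}" "\<lambda>k. F k t"] by simp
    finally show ?thesis .
  qed
  have mF: "(\<lambda>t. F k t) \<in> borel_measurable lborel" for k
    unfolding F_def I_def by measurable
  have "(\<integral>\<^sup>+ t. indicator {0..} t * ennreal (g t) \<partial>lborel) \<le> (\<integral>\<^sup>+ t. (\<Sum>k. F k t) \<partial>lborel)"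
    by (intro nn_integral_mono pw)
  also have "\<dots> = (\<Sum>k. \<integral>\<^sup>+ t. F k t \<partial>lborel)"
    by (rule nn_integral_suminf[OF mF])
  also have "\<dots> = (\<Sum>k. ennreal (T * Lc * q^k))"
  proof (rule suminf_cong)
    fix k
    have "(\<integral>\<^sup>+ t. F k t \<partial>lborel) = (\<integral>\<^sup>+ t. ennreal (Lc * q^k) * indicator (I k) t \<partial>lborel)"
      unfolding F_def by (simp add: mult.commute)
    also have "\<dots> = ennreal (Lc * q^k) * emeasure lborel (I k)"
      by (rule nn_integral_cmult_indicator) (simp add: I_def)
    also have "emeasure lborel (I k) = ennreal T" unfolding I_def using T
      by (subst emeasure_lborel_Ico) (auto simp: algebra_simps)
    finally show "(\<integral>\<^sup>+ t. F k t \<partial>lborel) = ennreal (T * Lc * q^k)"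
      using T Lc q by (simp add: ennreal_mult'[symmetric] mult_ac)
  qed
  also have "\<dots> = ennreal (\<Sum>k. T * Lc * q^k)"
    using T Lc q by (intro suminf_ennreal2 summable_mult summable_geometric) auto
  also have "(\<Sum>k. T * Lc * q^k) = T * Lc / (1 - q)"
    using q by (simp add: suminf_mult suminf_geometric summable_geometric divide_simps)
  finally show ?thesis .
qed


(* ---- part Final ---- *)


lemma ell_bound:
  fixes Q :: "real^'n^'n" and S :: "real^'m^'n" and R :: "real^'m^'m"
  assumes kQ: "\<forall>w. norm (Q *v w) \<le> kQ * norm w" and kS: "\<forall>w. norm (S *v w) \<le> kS * norm w"
    and kR: "\<forall>w. norm (R *v w) \<le> kR * norm w"
    and x: "norm x \<le> m" and u: "norm u \<le> m" and kpos: "kQ \<ge> 0" "kS \<ge> 0" "kR \<ge> 0"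
  shows "x \<bullet> (Q *v x) + 2 * (x \<bullet> (S *v u)) + u \<bullet> (R *v u) \<le> (kQ + 2 * kS + kR) * m^2"
proof -
  have m0: "m \<ge> 0" using x norm_ge_zero order_trans by blast
  have 1: "x \<bullet> (Q *v x) \<le> kQ * m^2"
  proof -
    have "x \<bullet> (Q *v x) \<le> norm x * norm (Q *v x)" by (rule order_trans[OF abs_ge_self Cauchy_Schwarz_ineq2])
    also have "\<dots> \<le> norm x * (kQ * norm x)" using kQ by (intro mult_left_mono) auto
    also have "\<dots> \<le> m * (kQ * m)" using x kpos m0 by (intro mult_mono) (auto intro: mult_left_mono)
    finally show ?thesis by (simp add: power2_eq_square mult_ac)
  qed
  have 2: "x \<bullet> (S *v u) \<le> kS * m^2"
  proof -
    have "x \<bullet> (S *v u) \<le> norm x * norm (S *v u)" by (rule order_trans[OF abs_ge_self Cauchy_Schwarz_ineq2])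
    also have "\<dots> \<le> norm x * (kS * norm u)" using kS by (intro mult_left_mono) auto
    also have "\<dots> \<le> m * (kS * m)" using x u kpos m0 by (intro mult_mono) (auto intro: mult_left_mono)
    finally show ?thesis by (simp add: power2_eq_square mult_ac)
  qed
  have 3: "u \<bullet> (R *v u) \<le> kR * m^2"
  proof -
    have "u \<bullet> (R *v u) \<le> norm u * norm (R *v u)" by (rule order_trans[OF abs_ge_self Cauchy_Schwarz_ineq2])
    also have "\<dots> \<le> norm u * (kR * norm u)" using kR by (intro mult_left_mono) auto
    also have "\<dots> \<le> m * (kR * m)" using u kpos m0 by (intro mult_mono) (auto intro: mult_left_mono)
    finally show ?thesis by (simp add: power2_eq_square mult_ac)
  qed
  show ?thesis using 1 2 3 by (simp add: algebra_simps)
qed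

lemma aux_frac: "(c::real) > 0 \<Longrightarrow> a > 0 \<Longrightarrow> b > 0 \<Longrightarrow> 4 * c * (X / (8 * c * a * b)) * a * b = X / 2"
  by (simp add: field_simps)

theorem proposition3:
  fixes A :: "real^'n^'n" and B :: "real^'m^'n"
    and U :: "(real^'m) set" and g :: "(real^'n) \<times> (real^'m) \<Rightarrow> real^'p"
    and Q :: "real^'n^'n" and S :: "real^'m^'n" and R :: "real^'m^'m"
    and E :: "((real^'n) \<times> (real^'m)) set" and ell :: "real^'n \<Rightarrow> real^'m \<Rightarrow> real"
    and lam :: real
  assumes A4: "stabilisable A B"
    and E_def: "E = {(x, u). \<forall>i. g (x, u) $ i \<le> 0}"
    and g_C2: "C2 g"
    and U_convex: "convex U" and U_compact: "compact U" and U_int: "0 \<in> interior U"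
    and E_convex: "convex E" and E_compact: "compact E" and E_int: "(0, 0) \<in> interior E"
    and g_convex: "\<forall>x i. convex_on UNIV (\<lambda>u. g (x, u) $ i)"
    and l_def: "ell = (\<lambda>x u. x \<bullet> (Q *v x) + 2 * (x \<bullet> (S *v u)) + u \<bullet> (R *v u))"
    and Q_sym: "transpose Q = Q" and R_sym: "transpose R = R"
    and pos_def: "\<forall>x u. (x, u) \<noteq> (0, 0) \<longrightarrow> ell x u > 0"
    and lam: "0 \<le> lam" "lam < 1"
  shows "\<exists>M::real. \<forall>x \<in> (\<lambda>y. lam *\<^sub>R y) ` viab_kernel A B E U. V_inf A B E U ell x \<le> ennreal M"
proof -
  obtain K :: "real^'n^'m" and C sg where KC: "C > 0" "sg > 0"
    "\<forall>v t. t \<ge> 0 \<longrightarrow> norm (Phi (A + B ** K) t v) \<le> C * exp (- sg * t) * norm v"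
    using stab_decay[OF A4] by blast
  obtain b where b: "\<forall>p\<in>E. norm p \<le> b" using compact_imp_bounded[OF E_compact] bounded_iff by blast
  define RE where "RE = max 0 b"
  have RE0: "RE \<ge> 0" unfolding RE_def by simp
  have REb: "\<forall>p\<in>E. norm (fst p) \<le> RE \<and> norm (snd p) \<le> RE"
  proof
    fix p assume "p \<in> E"
    then have "norm p \<le> RE" using b unfolding RE_def by fastforce
    moreover have "norm (fst p) \<le> norm p" "norm (snd p) \<le> norm p"
      using norm_fst_le[of "fst p" "snd p"] norm_snd_le[of "snd p" "fst p"] by auto
    ultimately show "norm (fst p) \<le> RE \<and> norm (snd p) \<le> RE" by linarith
  qed
  obtain rE where rE: "rE > 0" "ball (0, 0) rE \<subseteq> E" using E_int mem_interior by blast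
  obtain rU where rU: "rU > 0" "ball 0 rU \<subseteq> U" using U_int mem_interior by blast
  define r where "r = min rE rU"
  have r0: "r > 0" unfolding r_def using rE rU by simp
  have Eball: "\<forall>p. norm (fst p) + norm (snd p) < r \<longrightarrow> p \<in> E"
  proof (intro allI impI)
    fix p :: "(real^'n) \<times> (real^'m)"
    assume "norm (fst p) + norm (snd p) < r"
    moreover have "norm p \<le> norm (fst p) + norm (snd p)"
      using norm_Pair_le[of "fst p" "snd p"] by simp
    ultimately have "norm p < rE" unfolding r_def by linarith
    then have "p \<in> ball (0, 0) rE" by (simp add: dist_norm zero_prod_def[symmetric])
    then show "p \<in> E" using rE by blast
  qed
  have Uball: "\<forall>w. norm w < r \<longrightarrow> w \<in> U"
  proof (intro allI impI)
    fix w :: "real^'m" assume "norm w < r"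
    then have "w \<in> ball 0 rU" unfolding r_def by (simp add: dist_norm)
    then show "w \<in> U" using rU by blast
  qed
  obtain kK0 where kK0: "kK0 > 0" "\<forall>w. norm (K *v w) \<le> kK0 * norm w" using matvec_bound_gen by blast
  define T where "T = max 1 (ln (2 * C) / sg)"
  have T0: "T > 0" unfolding T_def by simp
  have CT: "C * exp (- sg * T) \<le> 1/2"
  proof -
    have "ln (2 * C) \<le> sg * T" using KC(2) unfolding T_def
      by (smt (verit, ccfv_SIG) divide_le_eq max.cobounded2 mult.commute)
    then have "exp (- sg * T) \<le> exp (- ln (2 * C))" by simp
    also have "\<dots> = 1 / (2 * C)" using KC(1) by (simp add: exp_minus inverse_eq_divide)
    finally show ?thesis using KC(1) by (simp add: field_simps)
  qed
  define \<delta> where "\<delta> = min (1/4) ((1 - lam) * r / (8 * C * (RE + 1) * (1 + kK0)))"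
  have \<delta>0: "\<delta> > 0" unfolding \<delta>_def using lam r0 KC(1) RE0 kK0(1) by (simp add: mult_pos_pos)
  define rho where "rho = 1 - \<delta>"
  have "\<delta> \<le> 1/4" unfolding \<delta>_def by simp
  then have rho: "3/4 \<le> rho" "rho < 1" unfolding rho_def using \<delta>0 by auto
  have small: "4 * C * (1 - rho) * RE * (1 + kK0) \<le> (1 - lam) * r / 2"
  proof -
    have "4 * C * (1 - rho) * RE * (1 + kK0) \<le> 4 * C * \<delta> * (RE + 1) * (1 + kK0)"
      unfolding rho_def using KC(1) \<delta>0 kK0(1) RE0 by (simp add: mult_right_mono mult_left_mono)
    also have "\<dots> \<le> 4 * C * ((1 - lam) * r / (8 * C * (RE + 1) * (1 + kK0))) * (RE + 1) * (1 + kK0)"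
      using KC(1) RE0 kK0(1) unfolding \<delta>_def
      by (intro mult_right_mono mult_left_mono) auto
    also have "\<dots> = (1 - lam) * r / 2" using KC(1) RE0 kK0(1) by (intro aux_frac) auto
    finally show ?thesis .
  qed
  obtain kQ where kQ: "kQ > 0" "\<forall>w. norm (Q *v w) \<le> kQ * norm w" using matvec_bound_gen by blast
  obtain kS where kS: "kS > 0" "\<forall>w. norm (S *v w) \<le> kS * norm w" using matvec_bound_gen by blast
  obtain kR where kR: "kR > 0" "\<forall>w. norm (R *v w) \<le> kR * norm w" using matvec_bound_gen by blast
  define R1 where "R1 = lam * RE + C * (4 * lam * (1 - rho) * RE) * (1 + kK0)"
  define Lc where "Lc = (kQ + 2 * kS + kR) * R1^2"
  have Lc0: "Lc \<ge> 0" unfolding Lc_def using kQ kS kR by simp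
  have q: "0 \<le> rho^2" "rho^2 < 1" using rho by (auto simp: power_less_one_iff abs_square_less_1)
  show ?thesis
  proof (intro exI[of _ "T * Lc / (1 - rho^2)"] ballI)
    fix x0 assume "x0 \<in> (\<lambda>y. lam *\<^sub>R y) ` viab_kernel A B E U"
    then obtain y where y: "y \<in> viab_kernel A B E U" and x0: "x0 = lam *\<^sub>R y" by blast
    then obtain uy where "uy \<in> adm_controls A B E U y" unfolding viab_kernel_def by blast
    then obtain xy where yL: "Linf_loc uy" and yT: "is_traj A B y uy xy"
      and yC: "\<forall>t\<ge>0. (xy t, uy t) \<in> E \<and> uy t \<in> U"
      unfolding adm_controls_def by blast
    obtain u x where ux: "u \<in> adm_controls A B E U (lam *\<^sub>R y)" "is_traj A B (lam *\<^sub>R y) u x"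
      and nb: "\<forall>t\<ge>0. norm (x t) \<le> rho^(kk T t) * R1 \<and> norm (u t) \<le> rho^(kk T t) * R1"
      using exists_ctrl[OF KC(3) KC(1) KC(2) T0 CT lam(1) lam(2) rho(1) rho(2) REb RE0 kK0(2)
          less_imp_le[OF kK0(1)] r0 Eball Uball small E_convex U_convex yL yT yC]
      unfolding R1_def by blast
    have gb: "ell (x t) (u t) \<le> Lc * (rho^2)^(kk T t)" if t: "t \<ge> 0" for t
    proof -
      have "ell (x t) (u t) \<le> (kQ + 2 * kS + kR) * (rho^(kk T t) * R1)^2"
        unfolding l_def using nb t kQ kS kR by (intro ell_bound) auto
      also have "\<dots> = Lc * (rho^2)^(kk T t)" unfolding Lc_def
        by (simp add: power_mult_distrib power_mult[symmetric] mult.commute)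
      finally show ?thesis .
    qed
    have "V_inf A B E U ell x0 \<le> (\<integral>\<^sup>+ s. indicator {0..} s * ennreal (ell (x s) (u s)) \<partial>lborel)"
      unfolding V_inf_def x0 using ux by (intro Inf_lower) blast
    also have "\<dots> \<le> ennreal (T * Lc / (1 - rho^2))"
      by (rule cost_bound[OF T0 q Lc0 gb])
    finally show "V_inf A B E U ell x0 \<le> ennreal (T * Lc / (1 - rho^2))" .
  qed
qed


end
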